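(* Let $m\ge4$, let $\mathcal W_1$ be an $m\times m$ quadrilateral labyrinth set in $Q$, and let $L_\infty$ be the associated quadrilateral labyrinth fractal. Then $Q\setminus L_\infty$ is not path connected.
   Context: Let $Q$ be a convex quadrilateral in $\mathbb{R}^2$. Divide $Q$ into two triangles by its shorter diagonal (either diagonal if they have equal length). Label the vertices $Q_1,Q_2,Q_3,Q_4$ anticlockwise, starting at an endpoint of that diagonal, so that the diagonal is $Q_1Q_3$. Let $\Delta_1$ be the closed triangle $Q_1Q_2Q_3$ and $\Delta_2$ the closed triangle $Q_3Q_4Q_1$. Every $x\in Q$ has a unique representation $x=\sum_{i=1}^4\alpha_iQ_i$, defined as follows. If $x\in\Delta_1$, then $\alpha_4=0$ and $(\alpha_1,\alpha_2,\alpha_3)$ are the barycentric coordinates of $x$ in $\Delta_1$. If $x\in\Delta_2$, then $\alpha_2=0$ and $(\alpha_1,\alpha_3,\alpha_4)$ are the barycentric coordinates of $x$ in $\Delta_2$. For an ordered quadruple $V=(V_1,\dots,V_4)$ define $P_V:Q\to\mathbb{R}^2$ by $P_V(x)=\sum_i\alpha_iV_i$. For an integer $m\ge2$, define the following index sets: - $A_1=\{(k_1,k_2,k_3,0)\in\mathbb{Z}_{\ge0}^4:k_1+k_2+k_3=m-1,\ k_2\ne0\}$, - $A_2=\{(k_1,0,k_3,k_4)\in\mathbb{Z}_{\ge0}^4:k_1+k_3+k_4=m-1,\ k_4\ne0\}$, - $A_3=\{(k_1,0,k_3,0)\in\mathbb{Z}_{\ge0}^4:k_1+k_3=m-1\}$,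 - $A=A_1\cup A_2\cup A_3$. For $k\in A$, let $S_m(k)$ be the quadrilateral with ordered vertices $R_1R_2R_3R_4$ given below. - If $k\in A_1$: $R_1=\frac{(k_1+1)Q_1+k_2Q_2+k_3Q_3}{m}$, $R_2=\frac{k_1Q_1+(k_2+1)Q_2+k_3Q_3}{m}$, $R_3=\frac{k_1Q_1+k_2Q_2+(k_3+1)Q_3}{m}$, $R_4=\frac{(k_1+1)Q_1+(k_2-1)Q_2+(k_3+1)Q_3}{m}$. - If $k\in A_2$: $R_1=\frac{(k_1+1)Q_1+k_3Q_3+k_4Q_4}{m}$, $R_2=\frac{(k_1+1)Q_1+(k_3+1)Q_3+(k_4-1)Q_4}{m}$, $R_3=\frac{k_1Q_1+(k_3+1)Q_3+k_4Q_4}{m}$, $R_4=\frac{k_1Q_1+k_3Q_3+(k_4+1)Q_4}{m}$. - If $k\in A_3$: $R_1=\frac{(k_1+1)Q_1+k_3Q_3}{m}$, $R_2=\frac{k_1Q_1+Q_2+k_3Q_3}{m}$, $R_3=\frac{k_1Q_1+(k_3+1)Q_3}{m}$, $R_4=\frac{k_1Q_1+k_3Q_3+Q_4}{m}$. Let $\mathcal S_m=\{S_m(k):k\in A\}$. For $\mathcal W\subseteq\mathcal S_m$, the graph $\mathcal G(\mathcal W)$ has vertex set $\mathcal W$, with two elements adjacent iff they have a common side. An $m\times m$ quadrilateral labyrinth set ($m\ge4$) is a set $\mathcal W_1\subseteq\mathcal S_m$ satisfying three properties. (1) Tree property: $\mathcal G(\mathcal W_1)$ is a tree. (2) Exit property: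 there is exactly one $(k_1,k_2,0,0)\in A$ with $S_m(k_1,k_2,0,0)\in\mathcal W_1$ and $S_m(0,0,k_2,k_1)\in\mathcal W_1$. There is also exactly one $(k_1,0,0,k_4)\in A$ with $S_m(k_1,0,0,k_4)\in\mathcal W_1$ and $S_m(0,k_1,k_4,0)\in\mathcal W_1$. (3) Corner property: $\mathcal W_1$ contains at most one element of $\{S_m(m-1,0,0,0),S_m(0,0,m-1,0)\}$ and at most one element of $\{S_m(0,m-1,0,0),S_m(0,0,0,m-1)\}$. Define recursively for $n\ge2$: $\mathcal W_n=\{P_{W}(W'):W'\in\mathcal W_1,\ W\in\mathcal W_{n-1}\}$. Here $P_W(W')$ is the quadrilateral whose ordered vertices are the images under $P_W$ of the ordered vertices of $W'$. Let $L_n=\bigcup_{W\in\mathcal W_n}W$ (closed regions) and $L_\infty=\bigcap_{n\ge1}L_n$. *)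

theory Defs
  imports "HOL-Analysis.Analysis"
begin

type_synonym pt = "real \<times> real"
type_synonym quad = "pt \<times> pt \<times> pt \<times> pt"
type_synonym idx = "nat \<times> nat \<times> nat \<times> nat"

definition cross2 :: "pt \<Rightarrow> pt \<Rightarrow> real" where
  "cross2 a b = fst a * snd b - snd a * fst b"

definition left_turn :: "pt \<Rightarrow> pt \<Rightarrow> pt \<Rightarrow> bool" where
  "left_turn a b c \<longleftrightarrow> cross2 (b - a) (c - b) > 0"

definition convex_quad_acw :: "pt \<Rightarrow> pt \<Rightarrow> pt \<Rightarrow> pt \<Rightarrow> bool" where
  "convex_quad_acw Q1 Q2 Q3 Q4 \<longleftrightarrow>
     left_turn Q1 Q2 Q3 \<and> left_turn Q2 Q3 Q4 \<and> left_turn Q3 Q4 Q1 \<and> left_turn Q4 Q1 Q2"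

definition bary3 :: "pt \<Rightarrow> pt \<Rightarrow> pt \<Rightarrow> pt \<Rightarrow> real \<times> real \<times> real" where
  "bary3 a b c x = (THE (\<alpha>, \<beta>, \<gamma>). \<alpha> + \<beta> + \<gamma> = 1 \<and> x = \<alpha> *\<^sub>R a + \<beta> *\<^sub>R b + \<gamma> *\<^sub>R c)"

definition Pmap :: "quad \<Rightarrow> quad \<Rightarrow> pt \<Rightarrow> pt" where
  "Pmap q V x = (case q of (Q1, Q2, Q3, Q4) \<Rightarrow> case V of (V1, V2, V3, V4) \<Rightarrow>
     if x \<in> convex hull {Q1, Q2, Q3}
     then (case bary3 Q1 Q2 Q3 x of (a1, a2, a3) \<Rightarrow> a1 *\<^sub>R V1 + a2 *\<^sub>R V2 + a3 *\<^sub>R V3)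
     else (case bary3 Q1 Q3 Q4 x of (a1, a3, a4) \<Rightarrow> a1 *\<^sub>R V1 + a3 *\<^sub>R V3 + a4 *\<^sub>R V4))"

definition map_quad :: "(pt \<Rightarrow> pt) \<Rightarrow> quad \<Rightarrow> quad" where
  "map_quad f V = (case V of (V1, V2, V3, V4) \<Rightarrow> (f V1, f V2, f V3, f V4))"

text \<open>The closed region bounded by the quadrilateral V1V2V3V4 (whose diagonal V1V3 is interior),
  i.e. the union of the triangles V1V2V3 and V3V4V1.\<close>
definition quad_region :: "quad \<Rightarrow> pt set" where
  "quad_region V = (case V of (V1, V2, V3, V4) \<Rightarrow>
     convex hull {V1, V2, V3} \<union> convex hull {V3, V4, V1})"

definition quad_sides :: "quad \<Rightarrow> pt set set" where
  "quad_sides V = (case V of (V1, V2, V3, V4) \<Rightarrow>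
     {closed_segment V1 V2, closed_segment V2 V3, closed_segment V3 V4, closed_segment V4 V1})"

definition quad_adj :: "quad \<Rightarrow> quad \<Rightarrow> bool" where
  "quad_adj W W' \<longleftrightarrow> W \<noteq> W' \<and> quad_sides W \<inter> quad_sides W' \<noteq> {}"

definition graph_connected :: "'a set \<Rightarrow> ('a \<Rightarrow> 'a \<Rightarrow> bool) \<Rightarrow> bool" where
  "graph_connected V E \<longleftrightarrow>
     (\<forall>u\<in>V. \<forall>v\<in>V. (\<lambda>x y. x \<in> V \<and> y \<in> V \<and> E x y)\<^sup>*\<^sup>* u v)"

definition graph_has_cycle :: "'a set \<Rightarrow> ('a \<Rightarrow> 'a \<Rightarrow> bool) \<Rightarrow> bool" where
  "graph_has_cycle V E \<longleftrightarrow>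
     (\<exists>cs. 3 \<le> length cs \<and> distinct cs \<and> set cs \<subseteq> V \<and>
        (\<forall>i < length cs. E (cs ! i) (cs ! ((i + 1) mod length cs))))"

definition is_tree :: "'a set \<Rightarrow> ('a \<Rightarrow> 'a \<Rightarrow> bool) \<Rightarrow> bool" where
  "is_tree V E \<longleftrightarrow> finite V \<and> V \<noteq> {} \<and> graph_connected V E \<and> \<not> graph_has_cycle V E"

definition A1 :: "nat \<Rightarrow> idx set" where
  "A1 m = {(k1, k2, k3, k4). k4 = 0 \<and> k1 + k2 + k3 = m - 1 \<and> k2 \<noteq> 0}"
definition A2 :: "nat \<Rightarrow> idx set" where
  "A2 m = {(k1, k2, k3, k4). k2 = 0 \<and> k1 + k3 + k4 = m - 1 \<and> k4 \<noteq> 0}"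
definition A3 :: "nat \<Rightarrow> idx set" where
  "A3 m = {(k1, k2, k3, k4). k2 = 0 \<and> k4 = 0 \<and> k1 + k3 = m - 1}"
definition Aidx :: "nat \<Rightarrow> idx set" where
  "Aidx m = A1 m \<union> A2 m \<union> A3 m"

definition Sm :: "quad \<Rightarrow> nat \<Rightarrow> idx \<Rightarrow> quad" where
  "Sm q m k = (case q of (Q1, Q2, Q3, Q4) \<Rightarrow> case k of (k1, k2, k3, k4) \<Rightarrow>
     let c = (\<lambda>a b c d. (1 / real m) *\<^sub>R (a *\<^sub>R Q1 + b *\<^sub>R Q2 + c *\<^sub>R Q3 + d *\<^sub>R Q4));
         x1 = real k1; x2 = real k2; x3 = real k3; x4 = real k4 in
     if k \<in> A1 m then
       (c (x1+1) x2 x3 0, c x1 (x2+1) x3 0, c x1 x2 (x3+1) 0, c (x1+1) (x2-1) (x3+1) 0)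
     else if k \<in> A2 m then
       (c (x1+1) 0 x3 x4, c (x1+1) 0 (x3+1) (x4-1), c x1 0 (x3+1) x4, c x1 0 x3 (x4+1))
     else if k \<in> A3 m then
       (c (x1+1) 0 x3 0, c x1 1 x3 0, c x1 0 (x3+1) 0, c x1 0 x3 1)
     else undefined)"

definition Sset :: "quad \<Rightarrow> nat \<Rightarrow> quad set" where
  "Sset q m = Sm q m ` Aidx m"

definition exit_property :: "quad \<Rightarrow> nat \<Rightarrow> quad set \<Rightarrow> bool" where
  "exit_property q m W \<longleftrightarrow>
     (\<exists>!(k1, k2). (k1, k2, 0, 0) \<in> Aidx m \<and> Sm q m (k1, k2, 0, 0) \<in> W \<and> Sm q m (0, 0, k2, k1) \<in> W) \<and>
     (\<exists>!(k1, k4). (k1, 0, 0, k4) \<in> Aidx m \<and> Sm q m (k1, 0, 0, k4) \<in> W \<and> Sm q m (0, k1, k4, 0) \<in> W)"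

definition corner_property :: "quad \<Rightarrow> nat \<Rightarrow> quad set \<Rightarrow> bool" where
  "corner_property q m W \<longleftrightarrow>
     \<not> (Sm q m (m - 1, 0, 0, 0) \<in> W \<and> Sm q m (0, 0, m - 1, 0) \<in> W) \<and>
     \<not> (Sm q m (0, m - 1, 0, 0) \<in> W \<and> Sm q m (0, 0, 0, m - 1) \<in> W)"

definition labyrinth_set :: "quad \<Rightarrow> nat \<Rightarrow> quad set \<Rightarrow> bool" where
  "labyrinth_set q m W \<longleftrightarrow> 4 \<le> m \<and> W \<subseteq> Sset q m \<and> is_tree W quad_adj \<and>
     exit_property q m W \<and> corner_property q m W"

text \<open>lab_level q W1 n is the set W_{n+1}.\<close>
fun lab_level :: "quad \<Rightarrow> quad set \<Rightarrow> nat \<Rightarrow> quad set" where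
  "lab_level q W1 0 = W1"
| "lab_level q W1 (Suc n) = {map_quad (Pmap q W) W' | W W'. W' \<in> W1 \<and> W \<in> lab_level q W1 n}"

definition lab_fractal :: "quad \<Rightarrow> quad set \<Rightarrow> pt set" where
  "lab_fractal q W1 = (\<Inter>n. \<Union>W \<in> lab_level q W1 n. quad_region W)"

end

theory Submission
  imports Defs
begin

definition orient :: "pt \<Rightarrow> pt \<Rightarrow> pt \<Rightarrow> real" where
  "orient a b c = cross2 (b - a) (c - a)"

lemma orient_alt: "orient a b c = (fst b - fst a) * (snd c - snd a) - (snd b - snd a) * (fst c - fst a)"
  by (simp add: orient_def cross2_def)

lemma orient_cyc: "orient b c a = orient a b c"
  by (simp add: orient_alt algebra_simps)
lemma orient_swap: "orient b a c = - orient a b c"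
  by (simp add: orient_alt algebra_simps)
lemma left_turn_orient: "left_turn a b c \<longleftrightarrow> orient a b c > 0"
  by (simp add: left_turn_def orient_alt cross2_def algebra_simps)

lemma orient_aff3: "u + v + w = 1 \<Longrightarrow>
  orient P R (u *\<^sub>R a + v *\<^sub>R b + w *\<^sub>R c) = u * orient P R a + v * orient P R b + w * orient P R c"
  unfolding orient_alt by simp algebra

lemma orient_aff4: "u + v + w + z = 1 \<Longrightarrow>
  orient P R (u *\<^sub>R a + v *\<^sub>R b + w *\<^sub>R c + z *\<^sub>R d) = u * orient P R a + v * orient P R b + w * orient P R c + z * orient P R d"
  unfolding orient_alt by simp algebra

lemma orient_degen[simp]: "orient a b a = 0" "orient a b b = 0" "orient a a b = 0"
  by (simp_all add: orient_alt)

lemma cramer0: "orient a b c *\<^sub>R x = orient x b c *\<^sub>R a + orient a x c *\<^sub>R b + orient a b x *\<^sub>R c"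
  by (simp add: prod_eq_iff orient_alt; intro conjI; algebra)

lemma cramer_sum: "orient x b c + orient a x c + orient a b x = orient a b c"
  by (simp add: orient_alt; algebra)


lemma sc_inv: "(d::real) \<noteq> 0 \<Longrightarrow> (1 / d) *\<^sub>R (d *\<^sub>R (x::pt)) = x"
  by simp

lemma cramer: assumes D: "orient a b c \<noteq> 0"
  shows "x = (orient x b c / orient a b c) *\<^sub>R a + (orient a x c / orient a b c) *\<^sub>R b + (orient a b x / orient a b c) *\<^sub>R c"
    and "orient x b c / orient a b c + orient a x c / orient a b c + orient a b x / orient a b c = 1"
proof -
  have "x = (1 / orient a b c) *\<^sub>R (orient a b c *\<^sub>R x)" by (rule sc_inv[OF D, symmetric])
  also have "\<dots> = (orient x b c / orient a b c) *\<^sub>R a + (orient a x c / orient a b c) *\<^sub>R b + (orient a b x / orient a b c) *\<^sub>R c"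
    by (subst cramer0) (simp add: scaleR_add_right)
  finally show "x = (orient x b c / orient a b c) *\<^sub>R a + (orient a x c / orient a b c) *\<^sub>R b + (orient a b x / orient a b c) *\<^sub>R c" .
  have "orient x b c / orient a b c + orient a x c / orient a b c + orient a b x / orient a b c
     = (orient x b c + orient a x c + orient a b x) / orient a b c"
    by (simp add: add_divide_distrib)
  also have "\<dots> = 1" using D by (simp add: cramer_sum)
  finally show "orient x b c / orient a b c + orient a x c / orient a b c + orient a b x / orient a b c = 1" .
qed

lemma mem_tri: assumes D: "orient a b c > 0"
  shows "x \<in> convex hull {a,b,c} \<longleftrightarrow> 0 \<le> orient x b c \<and> 0 \<le> orient a x c \<and> 0 \<le> orient a b x"
proof
  assume "x \<in> convex hull {a,b,c}"
  then obtain u v w where uvw: "0 \<le> u" "0 \<le> v" "0 \<le> w" "u+v+w=1" "x = u *\<^sub>R a + v *\<^sub>R b + w *\<^sub>R c"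
    unfolding convex_hull_3 by blast
  have h1: "orient b c x = u * orient b c a" using orient_aff3[OF uvw(4), of b c a b c] uvw(5) by simp
  have h2: "orient c a x = v * orient c a b" using orient_aff3[OF uvw(4), of c a a b c] uvw(5) by simp
  have h3: "orient a b x = w * orient a b c" using orient_aff3[OF uvw(4), of a b a b c] uvw(5) by simp
  have "orient x b c = u * orient a b c" using h1 orient_cyc[of b c x] orient_cyc[of b c a] by simp
  moreover have "orient a x c = v * orient a b c" using h2 orient_cyc[of a x c] orient_cyc[of c a b] orient_cyc[of b c a] by simp
  ultimately show "0 \<le> orient x b c \<and> 0 \<le> orient a x c \<and> 0 \<le> orient a b x"
    using uvw D h3 by simp
next
  assume h: "0 \<le> orient x b c \<and> 0 \<le> orient a x c \<and> 0 \<le> orient a b x"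
  have Dnz: "orient a b c \<noteq> 0" using D by simp
  note e = cramer(1)[OF Dnz, of x] and s = cramer(2)[OF Dnz, of x]
  have nn: "0 \<le> orient x b c / orient a b c" "0 \<le> orient a x c / orient a b c" "0 \<le> orient a b x / orient a b c"
    using h D by simp_all
  show "x \<in> convex hull {a,b,c}"
    unfolding convex_hull_3
    apply (rule CollectI)
    apply (rule exI[of _ "orient x b c / orient a b c"], rule exI[of _ "orient a x c / orient a b c"],
        rule exI[of _ "orient a b x / orient a b c"])
    apply (intro conjI)
        apply (fact e)
       apply (fact nn(1))
      apply (fact nn(2))
     apply (fact nn(3))
    apply (fact s)
    done
qed

definition cmb :: "real \<Rightarrow> real \<Rightarrow> real \<Rightarrow> real \<Rightarrow> quad \<Rightarrow> pt" where
  "cmb a b c d V = (case V of (V1, V2, V3, V4) \<Rightarrow> a *\<^sub>R V1 + b *\<^sub>R V2 + c *\<^sub>R V3 + d *\<^sub>R V4)"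

lemma cmb_simp: "cmb a b c d (V1,V2,V3,V4) = a *\<^sub>R V1 + b *\<^sub>R V2 + c *\<^sub>R V3 + d *\<^sub>R V4"
  by (simp add: cmb_def)

locale qctx =
  fixes Q1 Q2 Q3 Q4 :: pt
  assumes cq: "convex_quad_acw Q1 Q2 Q3 Q4"
begin

abbreviation "q \<equiv> (Q1, Q2, Q3, Q4)"
abbreviation "T1 \<equiv> convex hull {Q1, Q2, Q3}"
abbreviation "T2 \<equiv> convex hull {Q1, Q3, Q4}"
abbreviation "QQ \<equiv> convex hull {Q1, Q2, Q3, Q4}"

lemma D1: "orient Q1 Q2 Q3 > 0" and D2: "orient Q1 Q3 Q4 > 0"
  and O124: "orient Q1 Q2 Q4 > 0" and O234: "orient Q2 Q3 Q4 > 0"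
  using cq orient_cyc[of Q3 Q4 Q1] orient_cyc[of Q4 Q1 Q2] orient_cyc[of Q2 Q4 Q1] unfolding convex_quad_acw_def left_turn_orient
  by auto

lemma orq: "a + b + c + d = 1 \<Longrightarrow> orient P R (cmb a b c d q) =
   a * orient P R Q1 + b * orient P R Q2 + c * orient P R Q3 + d * orient P R Q4"
  unfolding cmb_simp by (rule orient_aff4)

lemma T1_iff: "x \<in> T1 \<longleftrightarrow> (\<exists>a b c. 0 \<le> a \<and> 0 \<le> b \<and> 0 \<le> c \<and> a + b + c = 1 \<and> x = cmb a b c 0 q)"
  unfolding convex_hull_3 cmb_simp by auto

lemma T2_iff: "x \<in> T2 \<longleftrightarrow> (\<exists>a c d. 0 \<le> a \<and> 0 \<le> c \<and> 0 \<le> d \<and> a + c + d = 1 \<and> x = cmb a 0 c d q)"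
  unfolding convex_hull_3 cmb_simp by auto

lemma uniq1: assumes "a + b + c = 1" "a' + b' + c' = 1" "cmb a b c 0 q = cmb a' b' c' 0 q"
  shows "a = a' \<and> b = b' \<and> c = c'"
proof -
  have "orient Q2 Q3 (cmb a b c 0 q) = a * orient Q2 Q3 Q1"
     "orient Q2 Q3 (cmb a' b' c' 0 q) = a' * orient Q2 Q3 Q1"
     "orient Q3 Q1 (cmb a b c 0 q) = b * orient Q3 Q1 Q2"
     "orient Q3 Q1 (cmb a' b' c' 0 q) = b' * orient Q3 Q1 Q2"
     "orient Q1 Q2 (cmb a b c 0 q) = c * orient Q1 Q2 Q3"
     "orient Q1 Q2 (cmb a' b' c' 0 q) = c' * orient Q1 Q2 Q3"
    using orq[of a b c 0 Q2 Q3] orq[of a' b' c' 0 Q2 Q3] orq[of a b c 0 Q3 Q1] orq[of a' b' c' 0 Q3 Q1]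
      orq[of a b c 0 Q1 Q2] orq[of a' b' c' 0 Q1 Q2] assms(1,2) by simp_all
  note f = this
  have e1: "a * orient Q2 Q3 Q1 = a' * orient Q2 Q3 Q1" by (subst f(1)[unfolded assms(3), symmetric]) (rule f(2))
  have e2: "b * orient Q3 Q1 Q2 = b' * orient Q3 Q1 Q2" by (subst f(3)[unfolded assms(3), symmetric]) (rule f(4))
  have e3: "c * orient Q1 Q2 Q3 = c' * orient Q1 Q2 Q3" by (subst f(5)[unfolded assms(3), symmetric]) (rule f(6))
  have nz: "orient Q2 Q3 Q1 \<noteq> 0" "orient Q3 Q1 Q2 \<noteq> 0" "orient Q1 Q2 Q3 \<noteq> 0"
    using D1 orient_cyc[of Q2 Q3 Q1] orient_cyc[of Q3 Q1 Q2] by auto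
  show ?thesis using e1[unfolded mult_right_cancel[OF nz(1)]] e2[unfolded mult_right_cancel[OF nz(2)]]
    e3[unfolded mult_right_cancel[OF nz(3)]] by blast
qed

lemma uniq2: assumes "a + c + d = 1" "a' + c' + d' = 1" "cmb a 0 c d q = cmb a' 0 c' d' q"
  shows "a = a' \<and> c = c' \<and> d = d'"
proof -
  have "orient Q3 Q4 (cmb a 0 c d q) = a * orient Q3 Q4 Q1"
     "orient Q3 Q4 (cmb a' 0 c' d' q) = a' * orient Q3 Q4 Q1"
     "orient Q4 Q1 (cmb a 0 c d q) = c * orient Q4 Q1 Q3"
     "orient Q4 Q1 (cmb a' 0 c' d' q) = c' * orient Q4 Q1 Q3"
     "orient Q1 Q3 (cmb a 0 c d q) = d * orient Q1 Q3 Q4"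
     "orient Q1 Q3 (cmb a' 0 c' d' q) = d' * orient Q1 Q3 Q4"
    using orq[of a 0 c d Q3 Q4] orq[of a' 0 c' d' Q3 Q4] orq[of a 0 c d Q4 Q1] orq[of a' 0 c' d' Q4 Q1]
      orq[of a 0 c d Q1 Q3] orq[of a' 0 c' d' Q1 Q3] assms(1,2) by simp_all
  note f = this
  have e1: "a * orient Q3 Q4 Q1 = a' * orient Q3 Q4 Q1" by (subst f(1)[unfolded assms(3), symmetric]) (rule f(2))
  have e2: "c * orient Q4 Q1 Q3 = c' * orient Q4 Q1 Q3" by (subst f(3)[unfolded assms(3), symmetric]) (rule f(4))
  have e3: "d * orient Q1 Q3 Q4 = d' * orient Q1 Q3 Q4" by (subst f(5)[unfolded assms(3), symmetric]) (rule f(6))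
  have nz: "orient Q3 Q4 Q1 \<noteq> 0" "orient Q4 Q1 Q3 \<noteq> 0" "orient Q1 Q3 Q4 \<noteq> 0"
    using D2 orient_cyc[of Q3 Q4 Q1] orient_cyc[of Q4 Q1 Q3] by auto
  show ?thesis using e1[unfolded mult_right_cancel[OF nz(1)]] e2[unfolded mult_right_cancel[OF nz(2)]]
    e3[unfolded mult_right_cancel[OF nz(3)]] by blast
qed

lemma onorm:
  "orient Q1 Q3 Q2 = - orient Q1 Q2 Q3"
  "orient Q2 Q1 Q3 = - orient Q1 Q2 Q3"
  "orient Q2 Q3 Q1 = orient Q1 Q2 Q3"
  "orient Q3 Q1 Q2 = orient Q1 Q2 Q3"
  "orient Q3 Q2 Q1 = - orient Q1 Q2 Q3"
  "orient Q1 Q4 Q3 = - orient Q1 Q3 Q4"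
  "orient Q3 Q1 Q4 = - orient Q1 Q3 Q4"
  "orient Q3 Q4 Q1 = orient Q1 Q3 Q4"
  "orient Q4 Q1 Q3 = orient Q1 Q3 Q4"
  "orient Q4 Q3 Q1 = - orient Q1 Q3 Q4"
  "orient Q1 Q4 Q2 = - orient Q1 Q2 Q4"
  "orient Q2 Q1 Q4 = - orient Q1 Q2 Q4"
  "orient Q2 Q4 Q1 = orient Q1 Q2 Q4"
  "orient Q4 Q1 Q2 = orient Q1 Q2 Q4"
  "orient Q4 Q2 Q1 = - orient Q1 Q2 Q4"
  "orient Q2 Q4 Q3 = - orient Q2 Q3 Q4"
  "orient Q3 Q2 Q4 = - orient Q2 Q3 Q4"
  "orient Q3 Q4 Q2 = orient Q2 Q3 Q4"
  "orient Q4 Q2 Q3 = orient Q2 Q3 Q4"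
  "orient Q4 Q3 Q2 = - orient Q2 Q3 Q4"
  by (simp_all add: orient_alt algebra_simps)

lemma bary1: assumes "a + b + c = 1" shows "bary3 Q1 Q2 Q3 (cmb a b c 0 q) = (a, b, c)"
  unfolding bary3_def
proof (rule the_equality)
  show "case (a, b, c) of (\<alpha>, \<beta>, \<gamma>) \<Rightarrow> \<alpha> + \<beta> + \<gamma> = 1 \<and> cmb a b c 0 q = \<alpha> *\<^sub>R Q1 + \<beta> *\<^sub>R Q2 + \<gamma> *\<^sub>R Q3"
    using assms by (simp add: cmb_simp)
next
  fix p assume h: "case p of (\<alpha>, \<beta>, \<gamma>) \<Rightarrow> \<alpha> + \<beta> + \<gamma> = 1 \<and> cmb a b c 0 q = \<alpha> *\<^sub>R Q1 + \<beta> *\<^sub>R Q2 + \<gamma> *\<^sub>R Q3"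
  obtain x y z where p: "p = (x, y, z)" by (cases p) auto
  with h have "x + y + z = 1" "cmb x y z 0 q = cmb a b c 0 q" by (auto simp: cmb_simp)
  then show "p = (a, b, c)" using uniq1[of x y z a b c] assms p by simp
qed

lemma bary2: assumes "a + c + d = 1" shows "bary3 Q1 Q3 Q4 (cmb a 0 c d q) = (a, c, d)"
  unfolding bary3_def
proof (rule the_equality)
  show "case (a, c, d) of (\<alpha>, \<beta>, \<gamma>) \<Rightarrow> \<alpha> + \<beta> + \<gamma> = 1 \<and> cmb a 0 c d q = \<alpha> *\<^sub>R Q1 + \<beta> *\<^sub>R Q3 + \<gamma> *\<^sub>R Q4"
    using assms by (simp add: cmb_simp)
next
  fix p assume h: "case p of (\<alpha>, \<beta>, \<gamma>) \<Rightarrow> \<alpha> + \<beta> + \<gamma> = 1 \<and> cmb a 0 c d q = \<alpha> *\<^sub>R Q1 + \<beta> *\<^sub>R Q3 + \<gamma> *\<^sub>R Q4"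
  obtain x y z where p: "p = (x, y, z)" by (cases p) auto
  with h have "x + y + z = 1" "cmb x 0 y z q = cmb a 0 c d q" by (auto simp: cmb_simp)
  then show "p = (a, c, d)" using uniq2[of x y z a c d] assms p by simp
qed

lemma notT1: assumes "a + c + d = 1" "d > 0" shows "cmb a 0 c d q \<notin> T1"
proof
  assume "cmb a 0 c d q \<in> T1"
  then obtain a' b' c' where h: "0 \<le> b'" "a' + b' + c' = 1" "cmb a 0 c d q = cmb a' b' c' 0 q"
    unfolding T1_iff by blast
  have "orient Q1 Q3 (cmb a 0 c d q) = d * orient Q1 Q3 Q4"
    using orq[of a 0 c d Q1 Q3] assms(1) by simp
  moreover have "orient Q1 Q3 (cmb a' b' c' 0 q) = - b' * orient Q1 Q2 Q3"
    using orq[of a' b' c' 0 Q1 Q3] h(2) by (simp add: onorm)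
  ultimately have "d * orient Q1 Q3 Q4 = - b' * orient Q1 Q2 Q3" using h(3) by simp
  moreover have "d * orient Q1 Q3 Q4 > 0" using assms(2) D2 by simp
  moreover have "b' * orient Q1 Q2 Q3 \<ge> 0" using h(1) D1 by simp
  ultimately show False by linarith
qed

lemma PM1: assumes "0 \<le> a" "0 \<le> b" "0 \<le> c" "a + b + c = 1"
  shows "Pmap q V (cmb a b c 0 q) = cmb a b c 0 V"
proof -
  obtain V1 V2 V3 V4 where V: "V = (V1, V2, V3, V4)" by (cases V) auto
  have "cmb a b c 0 q \<in> T1" unfolding T1_iff using assms by blast
  then show ?thesis unfolding Pmap_def V using bary1[OF assms(4)] by (simp add: cmb_simp)
qed

lemma PM2: assumes "0 \<le> a" "0 \<le> c" "0 \<le> d" "a + c + d = 1"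
  shows "Pmap q V (cmb a 0 c d q) = cmb a 0 c d V"
proof (cases "d = 0")
  case True
  then show ?thesis using PM1[of a 0 c V] assms by simp
next
  case False
  then have "d > 0" using assms by simp
  obtain V1 V2 V3 V4 where V: "V = (V1, V2, V3, V4)" by (cases V) auto
  have "cmb a 0 c d q \<notin> T1" using notT1[OF assms(4) \<open>d > 0\<close>] .
  then show ?thesis unfolding Pmap_def V using bary2[OF assms(4)] by (simp add: cmb_simp)
qed

lemma cmb_split: assumes "0 \<le> a" "0 \<le> b" "0 \<le> c" "0 \<le> d" "a + b + c + d = 1"
  shows "cmb a b c d q \<in> T1 \<or> cmb a b c d q \<in> T2"
proof -
  let ?x = "cmb a b c d q"
  have o1: "orient ?x Q2 Q3 = a * orient Q1 Q2 Q3 + d * orient Q2 Q3 Q4"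
    using orq[OF assms(5), of Q2 Q3] orient_cyc[of Q2 Q3 ?x] by (simp add: onorm)
  have o2: "orient Q1 ?x Q3 = b * orient Q1 Q2 Q3 - d * orient Q1 Q3 Q4"
    using orq[OF assms(5), of Q3 Q1] orient_cyc[of Q1 ?x Q3] by (simp add: onorm)
  have o3: "orient Q1 Q2 ?x = c * orient Q1 Q2 Q3 + d * orient Q1 Q2 Q4"
    using orq[OF assms(5), of Q1 Q2] by (simp add: onorm)
  have p1: "orient ?x Q3 Q4 = a * orient Q1 Q3 Q4 + b * orient Q2 Q3 Q4"
    using orq[OF assms(5), of Q3 Q4] orient_cyc[of Q3 Q4 ?x] by (simp add: onorm)
  have p2: "orient Q1 ?x Q4 = b * orient Q1 Q2 Q4 + c * orient Q1 Q3 Q4"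
    using orq[OF assms(5), of Q4 Q1] orient_cyc[of Q1 ?x Q4] by (simp add: onorm)
  have p3: "orient Q1 Q3 ?x = - b * orient Q1 Q2 Q3 + d * orient Q1 Q3 Q4"
    using orq[OF assms(5), of Q1 Q3] by (simp add: onorm)
  have nn: "0 \<le> a * orient Q1 Q2 Q3" "0 \<le> d * orient Q2 Q3 Q4" "0 \<le> c * orient Q1 Q2 Q3"
    "0 \<le> d * orient Q1 Q2 Q4" "0 \<le> a * orient Q1 Q3 Q4" "0 \<le> b * orient Q2 Q3 Q4"
    "0 \<le> b * orient Q1 Q2 Q4" "0 \<le> c * orient Q1 Q3 Q4"
    using assms D1 D2 O124 O234 by simp_all
  show ?thesis
  proof (cases "b * orient Q1 Q2 Q3 - d * orient Q1 Q3 Q4 \<ge> 0")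
    case True
    then have "?x \<in> T1" unfolding mem_tri[OF D1] o1 o2 o3 using nn by linarith
    then show ?thesis ..
  next
    case False
    then have "?x \<in> T2" unfolding mem_tri[OF D2] p1 p2 p3 using nn by linarith
    then show ?thesis ..
  qed
qed

lemma QQ_eq: "QQ = T1 \<union> T2"
proof
  show "T1 \<union> T2 \<subseteq> QQ" by (intro Un_least hull_mono) auto
  show "QQ \<subseteq> T1 \<union> T2"
  proof
    fix x assume "x \<in> QQ"
    then obtain u v y where uv: "0 \<le> u" "0 \<le> v" "u + v = 1" "y \<in> convex hull {Q2, Q3, Q4}"
        "x = u *\<^sub>R Q1 + v *\<^sub>R y"
      using convex_hull_insert[of "{Q2,Q3,Q4}" Q1] by auto
    then obtain \<alpha> \<beta> \<gamma> where abc: "0 \<le> \<alpha>" "0 \<le> \<beta>" "0 \<le> \<gamma>" "\<alpha> + \<beta> + \<gamma> = 1"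
        "y = \<alpha> *\<^sub>R Q2 + \<beta> *\<^sub>R Q3 + \<gamma> *\<^sub>R Q4"
      unfolding convex_hull_3 by blast
    have x: "x = cmb u (v * \<alpha>) (v * \<beta>) (v * \<gamma>) q"
      unfolding uv(5) abc(5) cmb_simp by (simp add: scaleR_add_right)
    have "u + v * \<alpha> + v * \<beta> + v * \<gamma> = 1" using uv(3) abc(4)
      by (metis add.assoc distrib_left mult.right_neutral)
    then show "x \<in> T1 \<union> T2" unfolding x using cmb_split[of u "v * \<alpha>" "v * \<beta>" "v * \<gamma>"] uv abc by simp
  qed
qed

definition G1 :: "quad \<Rightarrow> pt \<Rightarrow> pt" where
  "G1 V x = (case V of (V1,V2,V3,V4) \<Rightarrow> (orient x Q2 Q3 / orient Q1 Q2 Q3) *\<^sub>R V1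
     + (orient Q1 x Q3 / orient Q1 Q2 Q3) *\<^sub>R V2 + (orient Q1 Q2 x / orient Q1 Q2 Q3) *\<^sub>R V3)"

definition G2 :: "quad \<Rightarrow> pt \<Rightarrow> pt" where
  "G2 V x = (case V of (V1,V2,V3,V4) \<Rightarrow> (orient x Q3 Q4 / orient Q1 Q3 Q4) *\<^sub>R V1
     + (orient Q1 x Q4 / orient Q1 Q3 Q4) *\<^sub>R V3 + (orient Q1 Q3 x / orient Q1 Q3 Q4) *\<^sub>R V4)"

lemma orient_cont1: "continuous_on S (\<lambda>x. orient x b c)"
  unfolding orient_alt by (intro continuous_intros)
lemma orient_cont2: "continuous_on S (\<lambda>x. orient a x c)"
  unfolding orient_alt by (intro continuous_intros)
lemma orient_cont3: "continuous_on S (\<lambda>x. orient a b x)"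
  unfolding orient_alt by (intro continuous_intros)

lemma G1_cont: "continuous_on S (G1 V)"
proof -
  obtain V1 V2 V3 V4 where V: "V = (V1, V2, V3, V4)" by (cases V) auto
  have nz: "orient Q1 Q2 Q3 \<noteq> 0" using D1 by simp
  show ?thesis unfolding G1_def V prod.case
    by (intro continuous_on_add continuous_on_scaleR continuous_on_divide continuous_on_const
        orient_cont1 orient_cont2 orient_cont3 ballI nz)
qed

lemma G2_cont: "continuous_on S (G2 V)"
proof -
  obtain V1 V2 V3 V4 where V: "V = (V1, V2, V3, V4)" by (cases V) auto
  have nz: "orient Q1 Q3 Q4 \<noteq> 0" using D2 by simp
  show ?thesis unfolding G2_def V prod.case
    by (intro continuous_on_add continuous_on_scaleR continuous_on_divide continuous_on_const
        orient_cont1 orient_cont2 orient_cont3 ballI nz)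
qed

lemma G1_eq: assumes "x \<in> T1" shows "Pmap q V x = G1 V x"
proof -
  obtain a b c where abc: "0 \<le> a" "0 \<le> b" "0 \<le> c" "a + b + c = 1" "x = cmb a b c 0 q"
    using assms unfolding T1_iff by blast
  have s: "a + b + c + 0 = 1" using abc by simp
  obtain V1 V2 V3 V4 where V: "V = (V1, V2, V3, V4)" by (cases V) auto
  have o1: "orient x Q2 Q3 = a * orient Q1 Q2 Q3"
    using orq[OF s, of Q2 Q3] orient_cyc[of Q2 Q3 x] abc(5) by (simp add: onorm)
  have o2: "orient Q1 x Q3 = b * orient Q1 Q2 Q3"
    using orq[OF s, of Q3 Q1] orient_cyc[of Q1 x Q3] abc(5) by (simp add: onorm)
  have o3: "orient Q1 Q2 x = c * orient Q1 Q2 Q3"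
    using orq[OF s, of Q1 Q2] abc(5) by (simp add: onorm)
  show ?thesis unfolding abc(5) PM1[OF abc(1-4)] G1_def V
    unfolding abc(5)[symmetric] o1 o2 o3 using D1 by (simp add: cmb_simp)
qed

lemma G2_eq: assumes "x \<in> T2" shows "Pmap q V x = G2 V x"
proof -
  obtain a c d where acd: "0 \<le> a" "0 \<le> c" "0 \<le> d" "a + c + d = 1" "x = cmb a 0 c d q"
    using assms unfolding T2_iff by blast
  have s: "a + 0 + c + d = 1" using acd by simp
  obtain V1 V2 V3 V4 where V: "V = (V1, V2, V3, V4)" by (cases V) auto
  have o1: "orient x Q3 Q4 = a * orient Q1 Q3 Q4"
    using orq[OF s, of Q3 Q4] orient_cyc[of Q3 Q4 x] acd(5) by (simp add: onorm)
  have o2: "orient Q1 x Q4 = c * orient Q1 Q3 Q4"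
    using orq[OF s, of Q4 Q1] orient_cyc[of Q1 x Q4] acd(5) by (simp add: onorm)
  have o3: "orient Q1 Q3 x = d * orient Q1 Q3 Q4"
    using orq[OF s, of Q1 Q3] acd(5) by (simp add: onorm)
  show ?thesis unfolding acd(5) PM2[OF acd(1-4)] G2_def V
    unfolding acd(5)[symmetric] o1 o2 o3 using D2 by (simp add: cmb_simp)
qed

lemma closed_T: "closed T1" "closed T2" "closed QQ"
  by (rule compact_imp_closed, rule finite_imp_compact_convex_hull, simp)+

lemma Pmap_cont: "continuous_on QQ (Pmap q V)"
  unfolding QQ_eq
proof (rule continuous_on_closed_Un[OF closed_T(1,2)])
  show "continuous_on T1 (Pmap q V)"
    by (rule continuous_on_eq[OF G1_cont]) (erule G1_eq[symmetric])
  show "continuous_on T2 (Pmap q V)"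
    by (rule continuous_on_eq[OF G2_cont]) (erule G2_eq[symmetric])
qed

lemma Pmap_T1: "Pmap q V ` T1 = convex hull {fst V, fst (snd V), fst (snd (snd V))}"
proof -
  obtain V1 V2 V3 V4 where V: "V = (V1, V2, V3, V4)" by (cases V) auto
  show ?thesis
  proof
    show "Pmap q V ` T1 \<subseteq> convex hull {fst V, fst (snd V), fst (snd (snd V))}"
    proof
      fix y assume "y \<in> Pmap q V ` T1"
      then obtain x where x: "x \<in> T1" "y = Pmap q V x" by blast
      then obtain a b c where abc: "0 \<le> a" "0 \<le> b" "0 \<le> c" "a + b + c = 1" "x = cmb a b c 0 q"
        unfolding T1_iff by blast
      then have "y = cmb a b c 0 V" using PM1[OF abc(1-4)] x(2) by simp
      then show "y \<in> convex hull {fst V, fst (snd V), fst (snd (snd V))}"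
        unfolding V convex_hull_3 cmb_simp using abc by auto
    qed
    show "convex hull {fst V, fst (snd V), fst (snd (snd V))} \<subseteq> Pmap q V ` T1"
    proof
      fix y assume "y \<in> convex hull {fst V, fst (snd V), fst (snd (snd V))}"
      then obtain a b c where abc: "0 \<le> a" "0 \<le> b" "0 \<le> c" "a + b + c = 1" "y = cmb a b c 0 V"
        unfolding V convex_hull_3 by (auto simp: cmb_simp)
      have "cmb a b c 0 q \<in> T1" using abc unfolding T1_iff by blast
      moreover have "y = Pmap q V (cmb a b c 0 q)" using PM1[OF abc(1-4)] abc(5) by simp
      ultimately show "y \<in> Pmap q V ` T1" by blast
    qed
  qed
qed

lemma Pmap_T2: "Pmap q V ` T2 = convex hull {fst V, fst (snd (snd V)), snd (snd (snd V))}"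
proof -
  obtain V1 V2 V3 V4 where V: "V = (V1, V2, V3, V4)" by (cases V) auto
  show ?thesis
  proof
    show "Pmap q V ` T2 \<subseteq> convex hull {fst V, fst (snd (snd V)), snd (snd (snd V))}"
    proof
      fix y assume "y \<in> Pmap q V ` T2"
      then obtain x where x: "x \<in> T2" "y = Pmap q V x" by blast
      then obtain a c d where acd: "0 \<le> a" "0 \<le> c" "0 \<le> d" "a + c + d = 1" "x = cmb a 0 c d q"
        unfolding T2_iff by blast
      then have "y = cmb a 0 c d V" using PM2[OF acd(1-4)] x(2) by simp
      then show "y \<in> convex hull {fst V, fst (snd (snd V)), snd (snd (snd V))}"
        unfolding V convex_hull_3 cmb_simp using acd by auto
    qed
    show "convex hull {fst V, fst (snd (snd V)), snd (snd (snd V))} \<subseteq> Pmap q V ` T2"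
    proof
      fix y assume "y \<in> convex hull {fst V, fst (snd (snd V)), snd (snd (snd V))}"
      then obtain a c d where acd: "0 \<le> a" "0 \<le> c" "0 \<le> d" "a + c + d = 1" "y = cmb a 0 c d V"
        unfolding V convex_hull_3 by (auto simp: cmb_simp)
      have "cmb a 0 c d q \<in> T2" using acd unfolding T2_iff by blast
      moreover have "y = Pmap q V (cmb a 0 c d q)" using PM2[OF acd(1-4)] acd(5) by simp
      ultimately show "y \<in> Pmap q V ` T2" by blast
    qed
  qed
qed

lemma Pmap_image: "Pmap q V ` QQ = quad_region V"
proof -
  obtain V1 V2 V3 V4 where V: "V = (V1, V2, V3, V4)" by (cases V) auto
  have e: "{V3, V4, V1} = {V1, V3, V4}" by blast
  have r: "quad_region V = convex hull {V1, V2, V3} \<union> convex hull {V1, V3, V4}"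
    unfolding V quad_region_def by (simp only: prod.case e)
  have "Pmap q V ` QQ = Pmap q V ` T1 \<union> Pmap q V ` T2" unfolding QQ_eq by (rule image_Un)
  also have "\<dots> = convex hull {V1, V2, V3} \<union> convex hull {V1, V3, V4}"
    unfolding Pmap_T1 Pmap_T2 V by simp
  finally show ?thesis unfolding r .
qed

end

definition cv :: "nat \<Rightarrow> idx \<Rightarrow> quad \<Rightarrow> pt" where
  "cv m r V = (case r of (a, b, c, d) \<Rightarrow> cmb (real a / real m) (real b / real m) (real c / real m) (real d / real m) V)"

definition vc :: "nat \<Rightarrow> idx \<Rightarrow> idx \<times> idx \<times> idx \<times> idx" where
  "vc m k = (case k of (k1, k2, k3, k4) \<Rightarrow>
     if k \<in> A1 m then ((k1+1, k2, k3, 0), (k1, k2+1, k3, 0), (k1, k2, k3+1, 0), (k1+1, k2-1, k3+1, 0))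
     else if k \<in> A2 m then ((k1+1, 0, k3, k4), (k1+1, 0, k3+1, k4-1), (k1, 0, k3+1, k4), (k1, 0, k3, k4+1))
     else ((k1+1, 0, k3, 0), (k1, 1, k3, 0), (k1, 0, k3+1, 0), (k1, 0, k3, 1)))"

definition mq :: "('a \<Rightarrow> 'b) \<Rightarrow> 'a \<times> 'a \<times> 'a \<times> 'a \<Rightarrow> 'b \<times> 'b \<times> 'b \<times> 'b" where
  "mq f r = (case r of (r1, r2, r3, r4) \<Rightarrow> (f r1, f r2, f r3, f r4))"

lemma Sm_vc: assumes "k \<in> Aidx m" "m > 0" shows "Sm q m k = mq (\<lambda>r. cv m r q) (vc m k)"
proof -
  obtain Q1 Q2 Q3 Q4 where qq: "q = (Q1, Q2, Q3, Q4)" by (cases q) auto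
  obtain k1 k2 k3 k4 where kk: "k = (k1, k2, k3, k4)" by (cases k) auto
  consider "k \<in> A1 m" | "k \<notin> A1 m" "k \<in> A2 m" | "k \<notin> A1 m" "k \<notin> A2 m" "k \<in> A3 m"
    using assms unfolding Aidx_def by blast
  then show ?thesis
  proof cases
    case 1
    then have "k2 \<ge> 1" unfolding kk A1_def by simp
    then show ?thesis using 1 unfolding Sm_def vc_def mq_def cv_def qq kk Let_def
      using assms(2) by (simp add: cmb_simp prod_eq_iff of_nat_diff field_simps)
  next
    case 2
    then have "k4 \<ge> 1" unfolding kk A2_def by simp
    then show ?thesis using 2 unfolding Sm_def vc_def mq_def cv_def qq kk Let_def
      using assms(2) by (simp add: cmb_simp prod_eq_iff of_nat_diff field_simps)
  next
    case 3
    then show ?thesis unfolding Sm_def vc_def mq_def cv_def qq kk Let_def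
      using assms(2) by (simp add: cmb_simp prod_eq_iff field_simps)
  qed
qed

lemma cmb_comb: "a *\<^sub>R cmb p1 p2 p3 p4 V + b *\<^sub>R cmb r1 r2 r3 r4 V + c *\<^sub>R cmb w1 w2 w3 w4 V
  = cmb (a*p1 + b*r1 + c*w1) (a*p2 + b*r2 + c*w2) (a*p3 + b*r3 + c*w3) (a*p4 + b*r4 + c*w4) V"
proof -
  obtain V1 V2 V3 V4 where V: "V = (V1, V2, V3, V4)" by (cases V) auto
  show ?thesis unfolding V cmb_simp by (simp add: algebra_simps scaleR_add_left)
qed

lemma map_quad_simp: "map_quad f (R1, R2, R3, R4) = (f R1, f R2, f R3, f R4)"
  by (simp add: map_quad_def)

context qctx begin

lemma aff1: assumes "y1 \<in> T1" "y2 \<in> T1" "y3 \<in> T1" "0 \<le> a" "0 \<le> b" "0 \<le> c" "a + b + c = 1"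
  shows "Pmap q X (a *\<^sub>R y1 + b *\<^sub>R y2 + c *\<^sub>R y3) = a *\<^sub>R Pmap q X y1 + b *\<^sub>R Pmap q X y2 + c *\<^sub>R Pmap q X y3"
proof -
  obtain p1 p2 p3 where p: "0 \<le> p1" "0 \<le> p2" "0 \<le> p3" "p1 + p2 + p3 = 1" "y1 = cmb p1 p2 p3 0 q"
    using assms(1) unfolding T1_iff by blast
  obtain r1 r2 r3 where r: "0 \<le> r1" "0 \<le> r2" "0 \<le> r3" "r1 + r2 + r3 = 1" "y2 = cmb r1 r2 r3 0 q"
    using assms(2) unfolding T1_iff by blast
  obtain w1 w2 w3 where w: "0 \<le> w1" "0 \<le> w2" "0 \<le> w3" "w1 + w2 + w3 = 1" "y3 = cmb w1 w2 w3 0 q"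
    using assms(3) unfolding T1_iff by blast
  have sum: "(a*p1 + b*r1 + c*w1) + (a*p2 + b*r2 + c*w2) + (a*p3 + b*r3 + c*w3) = 1"
  proof -
    have "(a*p1 + b*r1 + c*w1) + (a*p2 + b*r2 + c*w2) + (a*p3 + b*r3 + c*w3)
      = a * (p1 + p2 + p3) + b * (r1 + r2 + r3) + c * (w1 + w2 + w3)" by (simp add: algebra_simps)
    then show ?thesis using p(4) r(4) w(4) assms(7) by simp
  qed
  have nn: "0 \<le> a*p1 + b*r1 + c*w1" "0 \<le> a*p2 + b*r2 + c*w2" "0 \<le> a*p3 + b*r3 + c*w3"
    using p r w assms(4-6) by simp_all
  have "Pmap q X (a *\<^sub>R y1 + b *\<^sub>R y2 + c *\<^sub>R y3)
     = Pmap q X (cmb (a*p1 + b*r1 + c*w1) (a*p2 + b*r2 + c*w2) (a*p3 + b*r3 + c*w3) 0 q)"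
    unfolding p(5) r(5) w(5) cmb_comb by simp
  also have "\<dots> = cmb (a*p1 + b*r1 + c*w1) (a*p2 + b*r2 + c*w2) (a*p3 + b*r3 + c*w3) 0 X"
    by (rule PM1[OF nn sum])
  also have "\<dots> = a *\<^sub>R cmb p1 p2 p3 0 X + b *\<^sub>R cmb r1 r2 r3 0 X + c *\<^sub>R cmb w1 w2 w3 0 X"
    unfolding cmb_comb by simp
  also have "\<dots> = a *\<^sub>R Pmap q X y1 + b *\<^sub>R Pmap q X y2 + c *\<^sub>R Pmap q X y3"
    unfolding p(5) r(5) w(5) PM1[OF p(1-4)] PM1[OF r(1-4)] PM1[OF w(1-4)] ..
  finally show ?thesis .
qed

lemma aff2: assumes "y1 \<in> T2" "y2 \<in> T2" "y3 \<in> T2" "0 \<le> a" "0 \<le> b" "0 \<le> c" "a + b + c = 1"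
  shows "Pmap q X (a *\<^sub>R y1 + b *\<^sub>R y2 + c *\<^sub>R y3) = a *\<^sub>R Pmap q X y1 + b *\<^sub>R Pmap q X y2 + c *\<^sub>R Pmap q X y3"
proof -
  obtain p1 p2 p3 where p: "0 \<le> p1" "0 \<le> p2" "0 \<le> p3" "p1 + p2 + p3 = 1" "y1 = cmb p1 0 p2 p3 q"
    using assms(1) unfolding T2_iff by blast
  obtain r1 r2 r3 where r: "0 \<le> r1" "0 \<le> r2" "0 \<le> r3" "r1 + r2 + r3 = 1" "y2 = cmb r1 0 r2 r3 q"
    using assms(2) unfolding T2_iff by blast
  obtain w1 w2 w3 where w: "0 \<le> w1" "0 \<le> w2" "0 \<le> w3" "w1 + w2 + w3 = 1" "y3 = cmb w1 0 w2 w3 q"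
    using assms(3) unfolding T2_iff by blast
  have sum: "(a*p1 + b*r1 + c*w1) + (a*p2 + b*r2 + c*w2) + (a*p3 + b*r3 + c*w3) = 1"
  proof -
    have "(a*p1 + b*r1 + c*w1) + (a*p2 + b*r2 + c*w2) + (a*p3 + b*r3 + c*w3)
      = a * (p1 + p2 + p3) + b * (r1 + r2 + r3) + c * (w1 + w2 + w3)" by (simp add: algebra_simps)
    then show ?thesis using p(4) r(4) w(4) assms(7) by simp
  qed
  have nn: "0 \<le> a*p1 + b*r1 + c*w1" "0 \<le> a*p2 + b*r2 + c*w2" "0 \<le> a*p3 + b*r3 + c*w3"
    using p r w assms(4-6) by simp_all
  have "Pmap q X (a *\<^sub>R y1 + b *\<^sub>R y2 + c *\<^sub>R y3)
     = Pmap q X (cmb (a*p1 + b*r1 + c*w1) 0 (a*p2 + b*r2 + c*w2) (a*p3 + b*r3 + c*w3) q)"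
    unfolding p(5) r(5) w(5) cmb_comb by simp
  also have "\<dots> = cmb (a*p1 + b*r1 + c*w1) 0 (a*p2 + b*r2 + c*w2) (a*p3 + b*r3 + c*w3) X"
    by (rule PM2[OF nn sum])
  also have "\<dots> = a *\<^sub>R cmb p1 0 p2 p3 X + b *\<^sub>R cmb r1 0 r2 r3 X + c *\<^sub>R cmb w1 0 w2 w3 X"
    unfolding cmb_comb by simp
  also have "\<dots> = a *\<^sub>R Pmap q X y1 + b *\<^sub>R Pmap q X y2 + c *\<^sub>R Pmap q X y3"
    unfolding p(5) r(5) w(5) PM2[OF p(1-4)] PM2[OF r(1-4)] PM2[OF w(1-4)] ..
  finally show ?thesis .
qed

lemma affT: assumes "{y1, y2, y3} \<subseteq> T1 \<or> {y1, y2, y3} \<subseteq> T2" "0 \<le> a" "0 \<le> b" "0 \<le> c" "a + b + c = 1"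
  shows "Pmap q X (a *\<^sub>R y1 + b *\<^sub>R y2 + c *\<^sub>R y3) = a *\<^sub>R Pmap q X y1 + b *\<^sub>R Pmap q X y2 + c *\<^sub>R Pmap q X y3"
  using assms(1)
proof
  assume h: "{y1, y2, y3} \<subseteq> T1"
  show ?thesis by (rule aff1[OF _ _ _ assms(2-5)]) (use h in simp_all)
next
  assume h: "{y1, y2, y3} \<subseteq> T2"
  show ?thesis by (rule aff2[OF _ _ _ assms(2-5)]) (use h in simp_all)
qed

definition good :: "quad \<Rightarrow> bool" where
  "good W = (case W of (R1, R2, R3, R4) \<Rightarrow>
     ({R1, R2, R3} \<subseteq> T1 \<or> {R1, R2, R3} \<subseteq> T2) \<and> ({R1, R3, R4} \<subseteq> T1 \<or> {R1, R3, R4} \<subseteq> T2))"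

lemma assoc: assumes "good W" "x \<in> QQ"
  shows "Pmap q (map_quad (Pmap q X) W) x = Pmap q X (Pmap q W x)"
proof -
  obtain R1 R2 R3 R4 where W: "W = (R1, R2, R3, R4)" by (cases W) auto
  have g: "{R1, R2, R3} \<subseteq> T1 \<or> {R1, R2, R3} \<subseteq> T2" "{R1, R3, R4} \<subseteq> T1 \<or> {R1, R3, R4} \<subseteq> T2"
    using assms(1) unfolding good_def W by simp_all
  have "x \<in> T1 \<or> x \<in> T2" using assms(2) unfolding QQ_eq by blast
  then show ?thesis
  proof
    assume "x \<in> T1"
    then obtain a b c where abc: "0 \<le> a" "0 \<le> b" "0 \<le> c" "a + b + c = 1" "x = cmb a b c 0 q"
      unfolding T1_iff by blast
    have "Pmap q (map_quad (Pmap q X) W) x = cmb a b c 0 (map_quad (Pmap q X) W)"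
      unfolding abc(5) by (rule PM1[OF abc(1-4)])
    also have "\<dots> = a *\<^sub>R Pmap q X R1 + b *\<^sub>R Pmap q X R2 + c *\<^sub>R Pmap q X R3"
      unfolding W map_quad_simp cmb_simp by simp
    also have "\<dots> = Pmap q X (a *\<^sub>R R1 + b *\<^sub>R R2 + c *\<^sub>R R3)"
      by (rule affT[OF g(1) abc(1-4), symmetric])
    also have "a *\<^sub>R R1 + b *\<^sub>R R2 + c *\<^sub>R R3 = Pmap q W x"
      using PM1[OF abc(1-4), of W] unfolding abc(5) W cmb_simp by simp
    finally show ?thesis .
  next
    assume "x \<in> T2"
    then obtain a c d where acd: "0 \<le> a" "0 \<le> c" "0 \<le> d" "a + c + d = 1" "x = cmb a 0 c d q"
      unfolding T2_iff by blast
    have "Pmap q (map_quad (Pmap q X) W) x = cmb a 0 c d (map_quad (Pmap q X) W)"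
      unfolding acd(5) by (rule PM2[OF acd(1-4)])
    also have "\<dots> = a *\<^sub>R Pmap q X R1 + c *\<^sub>R Pmap q X R3 + d *\<^sub>R Pmap q X R4"
      unfolding W map_quad_simp cmb_simp by simp
    also have "\<dots> = Pmap q X (a *\<^sub>R R1 + c *\<^sub>R R3 + d *\<^sub>R R4)"
      by (rule affT[OF g(2) acd(1-4), symmetric])
    also have "a *\<^sub>R R1 + c *\<^sub>R R3 + d *\<^sub>R R4 = Pmap q W x"
      using PM2[OF acd(1-4), of W] unfolding acd(5) W cmb_simp by simp
    finally show ?thesis .
  qed
qed

lemma cv_T1: assumes "a + b + c = m" "m > 0" shows "cv m (a, b, c, 0) q \<in> T1"
proof -
  have "real a / real m + real b / real m + real c / real m = 1"
    using assms by (simp add: add_divide_distrib[symmetric] flip: of_nat_add)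
  then show ?thesis unfolding T1_iff cv_def prod.case
    by (intro exI[of _ "real a / real m"] exI[of _ "real b / real m"] exI[of _ "real c / real m"]) simp
qed

lemma cv_T2: assumes "a + c + d = m" "m > 0" shows "cv m (a, 0, c, d) q \<in> T2"
proof -
  have "real a / real m + real c / real m + real d / real m = 1"
    using assms by (simp add: add_divide_distrib[symmetric] flip: of_nat_add)
  then show ?thesis unfolding T2_iff cv_def prod.case
    by (intro exI[of _ "real a / real m"] exI[of _ "real c / real m"] exI[of _ "real d / real m"]) simp
qed

lemma good_cell: assumes "k \<in> Aidx m" "m > 0" shows "good (Sm q m k)"
proof -
  obtain k1 k2 k3 k4 where kk: "k = (k1, k2, k3, k4)" by (cases k) auto
  consider "k \<in> A1 m" | "k \<notin> A1 m" "k \<in> A2 m" | "k \<notin> A1 m" "k \<notin> A2 m" "k \<in> A3 m"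
    using assms unfolding Aidx_def by blast
  then show ?thesis
  proof cases
    case 1
    then have h: "k4 = 0" "k1 + k2 + k3 = m - 1" "k2 \<ge> 1" unfolding kk A1_def by auto
    show ?thesis unfolding Sm_vc[OF assms] using 1 h assms(2)
      by (simp add: vc_def kk mq_def good_def cv_T1)
  next
    case 2
    then have h: "k2 = 0" "k1 + k3 + k4 = m - 1" "k4 \<ge> 1" unfolding kk A2_def by auto
    show ?thesis unfolding Sm_vc[OF assms] using 2 h assms(2)
      by (simp add: vc_def kk mq_def good_def cv_T2)
  next
    case 3
    then have h: "k2 = 0" "k4 = 0" "k1 + k3 = m - 1" unfolding kk A3_def by auto
    show ?thesis unfolding Sm_vc[OF assms] using 3 h assms(2)
      by (simp add: vc_def kk mq_def good_def cv_T1 cv_T2)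
  qed
qed

end




lemma vc_cases: assumes "k \<in> Aidx m"
  shows "(\<exists>k1 j k3. k = (k1, Suc j, k3, 0) \<and> k1 + Suc j + k3 = m - 1 \<and>
     vc m k = ((k1+1, Suc j, k3, 0), (k1, Suc j+1, k3, 0), (k1, Suc j, k3+1, 0), (k1+1, j, k3+1, 0))) \<or>
   (\<exists>k1 j k3. k = (k1, 0, k3, Suc j) \<and> k1 + k3 + Suc j = m - 1 \<and>
     vc m k = ((k1+1, 0, k3, Suc j), (k1+1, 0, k3+1, j), (k1, 0, k3+1, Suc j), (k1, 0, k3, Suc j+1))) \<or>
   (\<exists>k1 k3. k = (k1, 0, k3, 0) \<and> k1 + k3 = m - 1 \<and>
     vc m k = ((k1+1, 0, k3, 0), (k1, 1, k3, 0), (k1, 0, k3+1, 0), (k1, 0, k3, 1)))"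
proof -
  obtain k1 k2 k3 k4 where k0: "k = (k1, k2, k3, k4)" by (cases k) auto
  consider "k \<in> A1 m" | "k \<notin> A1 m" "k \<in> A2 m" | "k \<notin> A1 m" "k \<notin> A2 m" "k \<in> A3 m"
    using assms unfolding Aidx_def by blast
  then show ?thesis
  proof cases
    case 1
    then have hk: "k4 = 0" "k2 \<noteq> 0" "k1 + k2 + k3 = m - 1" unfolding k0 A1_def by auto
    obtain j where j: "k2 = Suc j" using hk(2) not0_implies_Suc by blast
    have "vc m k = ((k1+1, Suc j, k3, 0), (k1, Suc j+1, k3, 0), (k1, Suc j, k3+1, 0), (k1+1, j, k3+1, 0))"
      using 1 unfolding vc_def k0 j hk(1) by simp
    then show ?thesis using k0 hk j by blast
  next
    case 2
    then have hk: "k2 = 0" "k4 \<noteq> 0" "k1 + k3 + k4 = m - 1" unfolding k0 A2_def by auto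
    obtain j where j: "k4 = Suc j" using hk(2) not0_implies_Suc by blast
    have "vc m k = ((k1+1, 0, k3, Suc j), (k1+1, 0, k3+1, j), (k1, 0, k3+1, Suc j), (k1, 0, k3, Suc j+1))"
      using 2 unfolding vc_def k0 j hk(1) by simp
    then show ?thesis using k0 hk j by blast
  next
    case 3
    then have hk: "k2 = 0" "k4 = 0" "k1 + k3 = m - 1" unfolding k0 A3_def by auto
    have "vc m k = ((k1+1, 0, k3, 0), (k1, 1, k3, 0), (k1, 0, k3+1, 0), (k1, 0, k3, 1))"
      using 3 unfolding vc_def k0 hk(1,2) by simp
    then show ?thesis using k0 hk by blast
  qed
qed

lemma glue_nat: assumes "k \<in> Aidx m" "k' \<in> Aidx m" "k \<noteq> k'" "vc m k = (r1,r2,r3,r4)" "vc m k' = (p1,p2,p3,p4)"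
  shows "({r1,r2} = {p1,p2} \<or> {r1,r2} = {p2,p3} \<or> {r1,r2} = {p3,p4} \<or> {r1,r2} = {p4,p1} \<or>
   {r2,r3} = {p1,p2} \<or> {r2,r3} = {p2,p3} \<or> {r2,r3} = {p3,p4} \<or> {r2,r3} = {p4,p1} \<or>
   {r3,r4} = {p1,p2} \<or> {r3,r4} = {p2,p3} \<or> {r3,r4} = {p3,p4} \<or> {r3,r4} = {p4,p1} \<or>
   {r4,r1} = {p1,p2} \<or> {r4,r1} = {p2,p3} \<or> {r4,r1} = {p3,p4} \<or> {r4,r1} = {p4,p1}) \<longrightarrow>
   (r3 = p2 \<and> r4 = p1) \<or> (p3 = r2 \<and> p4 = r1) \<or> (r2 = p1 \<and> r3 = p4) \<or> (p2 = r1 \<and> p3 = r4)"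
  apply (insert vc_cases[OF assms(1)] vc_cases[OF assms(2)] assms(3-5))
  apply (elim disjE exE conjE)
  apply (simp_all add: doubleton_eq_iff)
  done
definition valid :: "nat \<Rightarrow> idx \<Rightarrow> bool" where
  "valid m r = (case r of (a, b, c, d) \<Rightarrow> a + b + c + d = m \<and> (b = 0 \<or> d = 0))"

lemma vc_valid: assumes "k \<in> Aidx m" "m > 0" "vc m k = (r1, r2, r3, r4)"
  shows "valid m r1" "valid m r2" "valid m r3" "valid m r4"
  using vc_cases[OF assms(1)] assms(2,3) unfolding valid_def by auto

definition v1 :: "quad \<Rightarrow> pt" where "v1 V = fst V"
definition v2 :: "quad \<Rightarrow> pt" where "v2 V = fst (snd V)"
definition v3 :: "quad \<Rightarrow> pt" where "v3 V = fst (snd (snd V))"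
definition v4 :: "quad \<Rightarrow> pt" where "v4 V = snd (snd (snd V))"

lemma v_simps[simp]: "v1 (a, b, c, d) = a" "v2 (a, b, c, d) = b" "v3 (a, b, c, d) = c" "v4 (a, b, c, d) = d"
  by (simp_all add: v1_def v2_def v3_def v4_def)

lemma sum_div: assumes "a + b + c + d = m" "m > 0"
  shows "real a / real m + real b / real m + real c / real m + real d / real m = 1"
  using assms by (simp add: add_divide_distrib[symmetric] flip: of_nat_add)

context qctx begin

lemma mixed: assumes "a + b + c = 1" "a' + c' + d' = 1" "0 \<le> b" "0 \<le> d'"
  "cmb a b c 0 q = cmb a' 0 c' d' q"
  shows "b = 0 \<and> d' = 0"
proof -
  have e1: "orient Q1 Q3 (cmb a b c 0 q) = - b * orient Q1 Q2 Q3"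
    using orq[of a b c 0 Q1 Q3] assms(1) by (simp add: onorm)
  have e2: "orient Q1 Q3 (cmb a' 0 c' d' q) = d' * orient Q1 Q3 Q4"
    using orq[of a' 0 c' d' Q1 Q3] assms(2) by simp
  have "- b * orient Q1 Q2 Q3 = d' * orient Q1 Q3 Q4" using e1 e2 assms(5) by simp
  moreover have "0 \<le> b * orient Q1 Q2 Q3" "0 \<le> d' * orient Q1 Q3 Q4" using assms(3,4) D1 D2 by simp_all
  ultimately have "b * orient Q1 Q2 Q3 = 0" "d' * orient Q1 Q3 Q4 = 0" by linarith+
  then show ?thesis using D1 D2 by simp
qed

lemma cv_inj: assumes "valid m r" "valid m r'" "m > 0" "cv m r q = cv m r' q" shows "r = r'"
proof -
  obtain a b c d where r: "r = (a, b, c, d)" by (cases r) auto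
  obtain a' b' c' d' where r': "r' = (a', b', c', d')" by (cases r') auto
  have s: "a + b + c + d = m" "a' + b' + c' + d' = m" "b = 0 \<or> d = 0" "b' = 0 \<or> d' = 0"
    using assms(1,2) unfolding valid_def r r' by auto
  have sr: "real a / real m + real b / real m + real c / real m + real d / real m = 1"
    "real a' / real m + real b' / real m + real c' / real m + real d' / real m = 1"
    using sum_div[OF s(1) assms(3)] sum_div[OF s(2) assms(3)] by auto
  have e: "cmb (real a / real m) (real b / real m) (real c / real m) (real d / real m) q =
    cmb (real a' / real m) (real b' / real m) (real c' / real m) (real d' / real m) q"
    using assms(4) unfolding cv_def r r' by simp
  have m0: "real m \<noteq> 0" using assms(3) by simp
  have T: "(d = 0 \<longrightarrow> d' = 0) \<and> (d \<noteq> 0 \<longrightarrow> b' = 0)"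
  proof -
    { assume h: "d = 0" "b' = 0"
      then have "real b / real m = 0 \<and> real d' / real m = 0"
        using mixed[of "real a / real m" "real b / real m" "real c / real m" "real a' / real m" "real c' / real m" "real d' / real m"]
          sr e by simp
      then have "b = 0 \<and> d' = 0" using m0 by simp }
    note X = this
    { assume h: "b = 0" "d' = 0"
      then have "real b' / real m = 0 \<and> real d / real m = 0"
        using mixed[of "real a' / real m" "real b' / real m" "real c' / real m" "real a / real m" "real c / real m" "real d / real m"]
          sr e by simp
      then have "b' = 0 \<and> d = 0" using m0 by simp }
    note Y = this
    show ?thesis using s(3,4) X Y by auto
  qed
  show ?thesis
  proof (cases "d = 0")
    case True
    then have d': "d' = 0" using T by simp
    have "real a / real m = real a' / real m \<and> real b / real m = real b' / real m \<and> real c / real m = real c' / real m"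
      by (rule uniq1) (use sr e True d' in simp_all)
    then show ?thesis using m0 True d' unfolding r r' by simp
  next
    case False
    then have b: "b = 0" "b' = 0" using s(3) T by auto
    have "real a / real m = real a' / real m \<and> real c / real m = real c' / real m \<and> real d / real m = real d' / real m"
      by (rule uniq2) (use sr e b in simp_all)
    then show ?thesis using m0 b unfolding r r' by simp
  qed
qed

lemma cv_pair_inj: assumes "valid m a" "valid m b" "valid m c" "valid m d" "m > 0"
  "closed_segment (cv m a q) (cv m b q) = closed_segment (cv m c q) (cv m d q)"
  shows "{a, b} = {c, d}"
proof -
  have "{cv m a q, cv m b q} = {cv m c q, cv m d q}" using assms(6) by simp
  then have "(cv m a q = cv m c q \<and> cv m b q = cv m d q) \<or> (cv m a q = cv m d q \<and> cv m b q = cv m c q)"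
    unfolding doubleton_eq_iff .
  then have "(a = c \<and> b = d) \<or> (a = d \<and> b = c)"
    using cv_inj[OF assms(1) assms(3) assms(5)] cv_inj[OF assms(2) assms(4) assms(5)]
      cv_inj[OF assms(1) assms(4) assms(5)] cv_inj[OF assms(2) assms(3) assms(5)] by blast
  then show ?thesis unfolding doubleton_eq_iff .
qed

lemma Sm_explicit: assumes "k \<in> Aidx m" "m > 0" "vc m k = (r1, r2, r3, r4)"
  shows "Sm q m k = (cv m r1 q, cv m r2 q, cv m r3 q, cv m r4 q)"
  using Sm_vc[OF assms(1,2)] assms(3) by (simp add: mq_def)

lemma adj_glue: assumes "k \<in> Aidx m" "k' \<in> Aidx m" "m > 0" "quad_adj (Sm q m k) (Sm q m k')"
  shows "(v3 (Sm q m k) = v2 (Sm q m k') \<and> v4 (Sm q m k) = v1 (Sm q m k')) \<or>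
         (v3 (Sm q m k') = v2 (Sm q m k) \<and> v4 (Sm q m k') = v1 (Sm q m k)) \<or>
         (v2 (Sm q m k) = v1 (Sm q m k') \<and> v3 (Sm q m k) = v4 (Sm q m k')) \<or>
         (v2 (Sm q m k') = v1 (Sm q m k) \<and> v3 (Sm q m k') = v4 (Sm q m k))"
proof -
  obtain r1 r2 r3 r4 where r: "vc m k = (r1, r2, r3, r4)" by (cases "vc m k") auto
  obtain p1 p2 p3 p4 where p: "vc m k' = (p1, p2, p3, p4)" by (cases "vc m k'") auto
  note V = Sm_explicit[OF assms(1,3) r] and V' = Sm_explicit[OF assms(2,3) p]
  note vr = vc_valid[OF assms(1,3) r] and vp = vc_valid[OF assms(2,3) p]
  have kne: "k \<noteq> k'" using assms(4) unfolding quad_adj_def by auto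
  obtain S where S: "S \<in> quad_sides (Sm q m k)" "S \<in> quad_sides (Sm q m k')"
    using assms(4) unfolding quad_adj_def by blast
  have "\<exists>P \<in> {(r1,r2),(r2,r3),(r3,r4),(r4,r1)}. S = closed_segment (cv m (fst P) q) (cv m (snd P) q)"
    using S(1) unfolding V quad_sides_def by auto
  then obtain P where P: "P \<in> {(r1,r2),(r2,r3),(r3,r4),(r4,r1)}" "S = closed_segment (cv m (fst P) q) (cv m (snd P) q)"
    by blast
  have "\<exists>P \<in> {(p1,p2),(p2,p3),(p3,p4),(p4,p1)}. S = closed_segment (cv m (fst P) q) (cv m (snd P) q)"
    using S(2) unfolding V' quad_sides_def by auto
  then obtain P' where P': "P' \<in> {(p1,p2),(p2,p3),(p3,p4),(p4,p1)}" "S = closed_segment (cv m (fst P') q) (cv m (snd P') q)"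
    by blast
  have val: "valid m (fst P)" "valid m (snd P)" "valid m (fst P')" "valid m (snd P')"
    using P(1) P'(1) vr vp by auto
  have eq: "{fst P, snd P} = {fst P', snd P'}"
    using cv_pair_inj[OF val assms(3)] P(2) P'(2) by simp
  have D: "{r1,r2} = {p1,p2} \<or> {r1,r2} = {p2,p3} \<or> {r1,r2} = {p3,p4} \<or> {r1,r2} = {p4,p1} \<or>
   {r2,r3} = {p1,p2} \<or> {r2,r3} = {p2,p3} \<or> {r2,r3} = {p3,p4} \<or> {r2,r3} = {p4,p1} \<or>
   {r3,r4} = {p1,p2} \<or> {r3,r4} = {p2,p3} \<or> {r3,r4} = {p3,p4} \<or> {r3,r4} = {p4,p1} \<or>
   {r4,r1} = {p1,p2} \<or> {r4,r1} = {p2,p3} \<or> {r4,r1} = {p3,p4} \<or> {r4,r1} = {p4,p1}"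
    using P(1) P'(1) eq by (elim insertE emptyE; simp)
  have "(r3 = p2 \<and> r4 = p1) \<or> (p3 = r2 \<and> p4 = r1) \<or> (r2 = p1 \<and> r3 = p4) \<or> (p2 = r1 \<and> p3 = r4)"
    using glue_nat[OF assms(1,2) kne r p] D by blast
  then show ?thesis unfolding V V' by auto
qed

end




lemma pc_union: assumes "graph_connected W E" "\<And>V. V \<in> W \<Longrightarrow> path_connected (F V)"
  "\<And>V V'. V \<in> W \<Longrightarrow> V' \<in> W \<Longrightarrow> E V V' \<Longrightarrow> F V \<inter> F V' \<noteq> {}"
  shows "path_connected (\<Union>V\<in>W. F V)"
  unfolding path_connected_component
proof (intro ballI)
  let ?U = "\<Union>V\<in>W. F V"
  fix x y assume "x \<in> ?U" "y \<in> ?U"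
  then obtain V V' where V: "V \<in> W" "x \<in> F V" and V': "V' \<in> W" "y \<in> F V'" by blast
  have R: "(\<lambda>a b. a \<in> W \<and> b \<in> W \<and> E a b)\<^sup>*\<^sup>* V V'" using assms(1) V(1) V'(1) unfolding graph_connected_def by blast
  have "\<forall>y\<in>F V'. path_component ?U x y"
    using R
  proof (induction rule: rtranclp_induct)
    case base
    show ?case
    proof
      fix y assume "y \<in> F V"
      then have "path_component (F V) x y" using assms(2)[OF V(1)] V(2) unfolding path_connected_component by blast
      then show "path_component ?U x y" by (rule path_component_of_subset[rotated]) (use V(1) in blast)
    qed
  next
    case (step a b)
    then have ab: "a \<in> W" "b \<in> W" "E a b" by auto
    obtain z where z: "z \<in> F a" "z \<in> F b" using assms(3)[OF ab] by blast
    have xz: "path_component ?U x z" using step.IH z(1) by blast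
    show ?case
    proof
      fix y assume "y \<in> F b"
      then have "path_component (F b) z y" using assms(2)[OF ab(2)] z(2) unfolding path_connected_component by blast
      then have "path_component ?U z y" by (rule path_component_of_subset[rotated]) (use ab(2) in blast)
      then show "path_component ?U x y" using xz path_component_trans by blast
    qed
  qed
  then show "path_component ?U x y" using V'(2) by blast
qed

locale lab = qctx +
  fixes m :: nat and W1 :: "quad set"
  assumes m0: "m > 0" and W1sub: "W1 \<subseteq> Sset q m" and finW: "finite W1"
    and conn: "graph_connected W1 quad_adj"
begin

definition Phi :: "pt set \<Rightarrow> pt set" where
  "Phi Y = (\<Union>V\<in>W1. Pmap q V ` Y)"

lemma cellW: "V \<in> W1 \<Longrightarrow> \<exists>k \<in> Aidx m. V = Sm q m k"
  using W1sub unfolding Sset_def by blast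

lemma goodW: "V \<in> W1 \<Longrightarrow> good V"
  using cellW good_cell m0 by blast

lemma good_region: assumes "good V" shows "quad_region V \<subseteq> QQ"
proof -
  obtain R1 R2 R3 R4 where V: "V = (R1, R2, R3, R4)" by (cases V) auto
  have T12: "T1 \<subseteq> QQ" "T2 \<subseteq> QQ" unfolding QQ_eq by auto
  have g: "{R1, R2, R3} \<subseteq> QQ" "{R1, R3, R4} \<subseteq> QQ"
    using assms T12 unfolding good_def V by auto
  have "convex hull {R1, R2, R3} \<subseteq> QQ" by (rule hull_minimal[OF g(1)]) (rule convex_convex_hull)
  moreover have "convex hull {R1, R3, R4} \<subseteq> QQ" by (rule hull_minimal[OF g(2)]) (rule convex_convex_hull)
  moreover have "{R3, R4, R1} = {R1, R3, R4}" by blast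
  ultimately show ?thesis unfolding V quad_region_def by simp
qed

lemma Phi_sub: "Y \<subseteq> QQ \<Longrightarrow> Phi Y \<subseteq> QQ"
proof -
  assume Y: "Y \<subseteq> QQ"
  have "\<And>V. V \<in> W1 \<Longrightarrow> Pmap q V ` Y \<subseteq> QQ"
  proof -
    fix V assume "V \<in> W1"
    have "Pmap q V ` Y \<subseteq> Pmap q V ` QQ" using Y by (rule image_mono)
    also have "\<dots> = quad_region V" by (rule Pmap_image)
    also have "\<dots> \<subseteq> QQ" by (rule good_region[OF goodW[OF \<open>V \<in> W1\<close>]])
    finally show "Pmap q V ` Y \<subseteq> QQ" .
  qed
  then show ?thesis unfolding Phi_def by blast
qed

lemma Phi_mono: "Y \<subseteq> Z \<Longrightarrow> Phi Y \<subseteq> Phi Z"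
  unfolding Phi_def by blast

lemma pow_sub: "(Phi ^^ n) QQ \<subseteq> QQ"
  by (induction n) (simp_all add: Phi_sub)

lemma pow_dec: "(Phi ^^ Suc n) QQ \<subseteq> (Phi ^^ n) QQ"
proof (induction n)
  case 0
  then show ?case using Phi_sub by simp
next
  case (Suc n)
  then show ?case using Phi_mono by simp
qed

lemma level_rep: "Y \<subseteq> QQ \<Longrightarrow> (\<Union>W\<in>lab_level q W1 n. Pmap q W ` Y) = (Phi ^^ Suc n) Y"
proof (induction n arbitrary: Y)
  case 0
  then show ?case by (simp add: Phi_def)
next
  case (Suc n)
  have "(\<Union>W\<in>lab_level q W1 (Suc n). Pmap q W ` Y)
      = (\<Union>W\<in>lab_level q W1 n. \<Union>W'\<in>W1. Pmap q (map_quad (Pmap q W) W') ` Y)"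
    unfolding lab_level.simps by blast
  also have "\<dots> = (\<Union>W\<in>lab_level q W1 n. \<Union>W'\<in>W1. Pmap q W ` (Pmap q W' ` Y))"
  proof -
    have "\<And>W W'. W' \<in> W1 \<Longrightarrow> Pmap q (map_quad (Pmap q W) W') ` Y = Pmap q W ` (Pmap q W' ` Y)"
    proof -
      fix W W' assume "W' \<in> W1"
      then have g: "good W'" by (rule goodW)
      have "\<And>x. x \<in> Y \<Longrightarrow> Pmap q (map_quad (Pmap q W) W') x = Pmap q W (Pmap q W' x)"
        using assoc[OF g] Suc.prems by blast
      then show "Pmap q (map_quad (Pmap q W) W') ` Y = Pmap q W ` (Pmap q W' ` Y)"
        unfolding image_image by (rule image_cong[OF refl])
    qed
    then show ?thesis by simp
  qed
  also have "\<dots> = (\<Union>W\<in>lab_level q W1 n. Pmap q W ` Phi Y)"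
    unfolding Phi_def image_UN by simp
  also have "\<dots> = (Phi ^^ Suc n) (Phi Y)" using Suc.IH[OF Phi_sub[OF Suc.prems]] .
  also have "\<dots> = (Phi ^^ Suc (Suc n)) Y" by (simp only: funpow_Suc_right o_apply)
  finally show ?case .
qed

lemma Ln_eq: "(\<Union>W\<in>lab_level q W1 n. quad_region W) = (Phi ^^ Suc n) QQ"
  using level_rep[of QQ n] Pmap_image by simp

lemma fin_level: "finite (lab_level q W1 n)"
proof (induction n)
  case 0
  then show ?case using finW by simp
next
  case (Suc n)
  have "lab_level q W1 (Suc n) = (\<lambda>p. map_quad (Pmap q (fst p)) (snd p)) ` (lab_level q W1 n \<times> W1)"
    unfolding lab_level.simps by force
  then show ?case using Suc finW by simp
qed

lemma closed_region: "closed (quad_region V)"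
proof -
  obtain R1 R2 R3 R4 where V: "V = (R1, R2, R3, R4)" by (cases V) auto
  show ?thesis unfolding V quad_region_def prod.case
    by (intro closed_Un compact_imp_closed finite_imp_compact_convex_hull) simp_all
qed

lemma closed_pow: "closed ((Phi ^^ Suc n) QQ)"
  unfolding Ln_eq[symmetric] using fin_level closed_region by (intro closed_UN) auto

end
lemma cmb2: "a *\<^sub>R cmb p1 p2 p3 p4 V + b *\<^sub>R cmb r1 r2 r3 r4 V
  = cmb (a*p1 + b*r1) (a*p2 + b*r2) (a*p3 + b*r3) (a*p4 + b*r4) V"
  using cmb_comb[of a p1 p2 p3 p4 V b r1 r2 r3 r4 0] by simp

lemma cmb_cong4: "a = a' \<Longrightarrow> b = b' \<Longrightarrow> c = c' \<Longrightarrow> d = d' \<Longrightarrow> cmb a b c d V = cmb a' b' c' d' V"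
  by simp

context qctx begin

definition "Apt s = cmb (1 - s) s 0 0 q"
definition "Cpt s = cmb 0 0 s (1 - s) q"
definition "Dpt t = cmb t 0 0 (1 - t) q"
definition "Bpt t = cmb 0 t (1 - t) 0 q"

lemma P_Apt: "0 \<le> s \<Longrightarrow> s \<le> 1 \<Longrightarrow> Pmap q V (Apt s) = (1 - s) *\<^sub>R v1 V + s *\<^sub>R v2 V"
  unfolding Apt_def by (subst PM1) (auto simp: cmb_def v1_def v2_def split: prod.split)
lemma P_Cpt: "0 \<le> s \<Longrightarrow> s \<le> 1 \<Longrightarrow> Pmap q V (Cpt s) = s *\<^sub>R v3 V + (1 - s) *\<^sub>R v4 V"
  unfolding Cpt_def by (subst PM2) (auto simp: cmb_def v3_def v4_def split: prod.split)
lemma P_Dpt: "0 \<le> t \<Longrightarrow> t \<le> 1 \<Longrightarrow> Pmap q V (Dpt t) = t *\<^sub>R v1 V + (1 - t) *\<^sub>R v4 V"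
  unfolding Dpt_def by (subst PM2) (auto simp: cmb_def v1_def v4_def split: prod.split)
lemma P_Bpt: "0 \<le> t \<Longrightarrow> t \<le> 1 \<Longrightarrow> Pmap q V (Bpt t) = t *\<^sub>R v2 V + (1 - t) *\<^sub>R v3 V"
  unfolding Bpt_def by (subst PM1) (auto simp: cmb_def v2_def v3_def split: prod.split)

lemma pts_QQ: assumes "0 \<le> s" "s \<le> 1" shows "Apt s \<in> QQ" "Cpt s \<in> QQ" "Dpt s \<in> QQ" "Bpt s \<in> QQ"
proof -
  have "Apt s \<in> T1" unfolding Apt_def T1_iff using assms by (intro exI[of _ "1 - s"] exI[of _ s] exI[of _ 0]) simp
  moreover have "Bpt s \<in> T1" unfolding Bpt_def T1_iff using assms by (intro exI[of _ 0] exI[of _ s] exI[of _ "1 - s"]) simp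
  moreover have "Cpt s \<in> T2" unfolding Cpt_def T2_iff using assms by (intro exI[of _ 0] exI[of _ s] exI[of _ "1 - s"]) simp
  moreover have "Dpt s \<in> T2" unfolding Dpt_def T2_iff using assms by (intro exI[of _ s] exI[of _ 0] exI[of _ "1 - s"]) simp
  ultimately show "Apt s \<in> QQ" "Cpt s \<in> QQ" "Dpt s \<in> QQ" "Bpt s \<in> QQ" unfolding QQ_eq by auto
qed

lemma vcA: "k1 + k2 = m - 1 \<Longrightarrow> fst (vc m (k1, k2, 0, 0)) = (k1+1, k2, 0, 0) \<and> fst (snd (vc m (k1, k2, 0, 0))) = (k1, k2+1, 0, 0)"
  by (cases "k2 = 0") (simp_all add: vc_def A1_def A2_def)
lemma vcC: "k1 + k2 = m - 1 \<Longrightarrow> fst (snd (snd (vc m (0, 0, k2, k1)))) = (0, 0, k2+1, k1) \<and> snd (snd (snd (vc m (0, 0, k2, k1)))) = (0, 0, k2, k1+1)"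
  by (cases "k1 = 0") (simp_all add: vc_def A1_def A2_def)
lemma vcD: "k1 + k4 = m - 1 \<Longrightarrow> fst (vc m (k1, 0, 0, k4)) = (k1+1, 0, 0, k4) \<and> snd (snd (snd (vc m (k1, 0, 0, k4)))) = (k1, 0, 0, k4+1)"
  by (cases "k4 = 0") (simp_all add: vc_def A1_def A2_def)
lemma vcB: "k1 + k4 = m - 1 \<Longrightarrow> fst (snd (vc m (0, k1, k4, 0))) = (0, k1+1, k4, 0) \<and> fst (snd (snd (vc m (0, k1, k4, 0)))) = (0, k1, k4+1, 0)"
  by (cases "k1 = 0") (simp_all add: vc_def A1_def A2_def)

lemma idx_mem: assumes "k1 + k2 = m - 1"
  shows "(k1, k2, 0, 0) \<in> Aidx m" "(0, 0, k2, k1) \<in> Aidx m" "(k1, 0, 0, k2) \<in> Aidx m" "(0, k1, k2, 0) \<in> Aidx m"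
  using assms by (auto simp: Aidx_def A1_def A2_def A3_def)

lemma Sm_v: assumes "k \<in> Aidx m" "m > 0"
  shows "v1 (Sm q m k) = cv m (fst (vc m k)) q" "v2 (Sm q m k) = cv m (fst (snd (vc m k))) q"
    "v3 (Sm q m k) = cv m (fst (snd (snd (vc m k)))) q" "v4 (Sm q m k) = cv m (snd (snd (snd (vc m k)))) q"
  using Sm_vc[OF assms] by (simp_all add: mq_def v1_def v2_def v3_def v4_def split: prod.split)

lemma exA: assumes "k1 + k2 = m - 1" "m > 0" "0 \<le> s" "s \<le> 1"
  shows "Pmap q (Sm q m (k1, k2, 0, 0)) (Apt s) = Apt ((real k2 + s) / real m)"
proof -
  have mk: "real k1 = real m - real k2 - 1" using assms(1,2) by linarith
  have m0: "m \<noteq> 0" using assms(2) by simp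
  have e1: "v1 (Sm q m (k1, k2, 0, 0)) = cv m (k1+1, k2, 0, 0) q"
    using Sm_v(1)[OF idx_mem(1)[OF assms(1)] assms(2)] vcA[OF assms(1)] by simp
  have e2: "v2 (Sm q m (k1, k2, 0, 0)) = cv m (k1, k2+1, 0, 0) q"
    using Sm_v(2)[OF idx_mem(1)[OF assms(1)] assms(2)] vcA[OF assms(1)] by simp
  have "Pmap q (Sm q m (k1, k2, 0, 0)) (Apt s) = ((1 - s) *\<^sub>R v1 (Sm q m (k1, k2, 0, 0)) + s *\<^sub>R v2 (Sm q m (k1, k2, 0, 0)))" by (rule P_Apt[OF assms(3,4)])
  also have "\<dots> = Apt ((real k2 + s) / real m)"
    unfolding e1 e2 Apt_def cv_def prod.case cmb2 by (rule cmb_cong4) (use mk m0 in \<open>simp_all add: field_simps\<close>)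
  finally show ?thesis .
qed

lemma exC: assumes "k1 + k2 = m - 1" "m > 0" "0 \<le> s" "s \<le> 1"
  shows "Pmap q (Sm q m (0, 0, k2, k1)) (Cpt s) = Cpt ((real k2 + s) / real m)"
proof -
  have mk: "real k1 = real m - real k2 - 1" using assms(1,2) by linarith
  have m0: "m \<noteq> 0" using assms(2) by simp
  have e1: "v3 (Sm q m (0, 0, k2, k1)) = cv m (0, 0, k2+1, k1) q"
    using Sm_v(3)[OF idx_mem(2)[OF assms(1)] assms(2)] vcC[OF assms(1)] by simp
  have e2: "v4 (Sm q m (0, 0, k2, k1)) = cv m (0, 0, k2, k1+1) q"
    using Sm_v(4)[OF idx_mem(2)[OF assms(1)] assms(2)] vcC[OF assms(1)] by simp
  have "Pmap q (Sm q m (0, 0, k2, k1)) (Cpt s) = (s *\<^sub>R v3 (Sm q m (0, 0, k2, k1)) + (1 - s) *\<^sub>R v4 (Sm q m (0, 0, k2, k1)))" by (rule P_Cpt[OF assms(3,4)])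
  also have "\<dots> = Cpt ((real k2 + s) / real m)"
    unfolding e1 e2 Cpt_def cv_def prod.case cmb2 by (rule cmb_cong4) (use mk m0 in \<open>simp_all add: field_simps\<close>)
  finally show ?thesis .
qed

lemma exD: assumes "k1 + k4 = m - 1" "m > 0" "0 \<le> t" "t \<le> 1"
  shows "Pmap q (Sm q m (k1, 0, 0, k4)) (Dpt t) = Dpt ((real k1 + t) / real m)"
proof -
  have mk: "real k4 = real m - real k1 - 1" using assms(1,2) by linarith
  have m0: "m \<noteq> 0" using assms(2) by simp
  have e1: "v1 (Sm q m (k1, 0, 0, k4)) = cv m (k1+1, 0, 0, k4) q"
    using Sm_v(1)[OF idx_mem(3)[OF assms(1)] assms(2)] vcD[OF assms(1)] by simp
  have e2: "v4 (Sm q m (k1, 0, 0, k4)) = cv m (k1, 0, 0, k4+1) q"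
    using Sm_v(4)[OF idx_mem(3)[OF assms(1)] assms(2)] vcD[OF assms(1)] by simp
  have "Pmap q (Sm q m (k1, 0, 0, k4)) (Dpt t) = (t *\<^sub>R v1 (Sm q m (k1, 0, 0, k4)) + (1 - t) *\<^sub>R v4 (Sm q m (k1, 0, 0, k4)))" by (rule P_Dpt[OF assms(3,4)])
  also have "\<dots> = Dpt ((real k1 + t) / real m)"
    unfolding e1 e2 Dpt_def cv_def prod.case cmb2 by (rule cmb_cong4) (use mk m0 in \<open>simp_all add: field_simps\<close>)
  finally show ?thesis .
qed

lemma exB: assumes "k1 + k4 = m - 1" "m > 0" "0 \<le> t" "t \<le> 1"
  shows "Pmap q (Sm q m (0, k1, k4, 0)) (Bpt t) = Bpt ((real k1 + t) / real m)"
proof -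
  have mk: "real k4 = real m - real k1 - 1" using assms(1,2) by linarith
  have m0: "m \<noteq> 0" using assms(2) by simp
  have e1: "v2 (Sm q m (0, k1, k4, 0)) = cv m (0, k1+1, k4, 0) q"
    using Sm_v(2)[OF idx_mem(4)[OF assms(1)] assms(2)] vcB[OF assms(1)] by simp
  have e2: "v3 (Sm q m (0, k1, k4, 0)) = cv m (0, k1, k4+1, 0) q"
    using Sm_v(3)[OF idx_mem(4)[OF assms(1)] assms(2)] vcB[OF assms(1)] by simp
  have "Pmap q (Sm q m (0, k1, k4, 0)) (Bpt t) = (t *\<^sub>R v2 (Sm q m (0, k1, k4, 0)) + (1 - t) *\<^sub>R v3 (Sm q m (0, k1, k4, 0)))" by (rule P_Bpt[OF assms(3,4)])
  also have "\<dots> = Bpt ((real k1 + t) / real m)"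
    unfolding e1 e2 Bpt_def cv_def prod.case cmb2 by (rule cmb_cong4) (use mk m0 in \<open>simp_all add: field_simps\<close>)
  finally show ?thesis .
qed

end
locale lab2 = lab +
  assumes exitp: "exit_property q m W1"
begin

lemma glue_int: assumes "V \<in> W1" "V' \<in> W1" "quad_adj V V'" "0 \<le> s" "s \<le> 1" "0 \<le> t" "t \<le> 1"
  "Apt s \<in> S" "Cpt s \<in> S" "Dpt t \<in> S" "Bpt t \<in> S"
  shows "Pmap q V ` S \<inter> Pmap q V' ` S \<noteq> {}"
proof -
  obtain k where k: "k \<in> Aidx m" "V = Sm q m k" using cellW[OF assms(1)] by blast
  obtain k' where k': "k' \<in> Aidx m" "V' = Sm q m k'" using cellW[OF assms(2)] by blast
  have G: "(v3 V = v2 V' \<and> v4 V = v1 V') \<or> (v3 V' = v2 V \<and> v4 V' = v1 V) \<or>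
         (v2 V = v1 V' \<and> v3 V = v4 V') \<or> (v2 V' = v1 V \<and> v3 V' = v4 V)"
    using adj_glue[OF k(1) k'(1) m0] assms(3) unfolding k(2) k'(2) by blast
  note PA = P_Apt[OF assms(4,5)] and PC = P_Cpt[OF assms(4,5)]
    and PD = P_Dpt[OF assms(6,7)] and PB = P_Bpt[OF assms(6,7)]
  from G show ?thesis
  proof (elim disjE conjE)
    assume h: "v3 V = v2 V'" "v4 V = v1 V'"
    have "Pmap q V (Cpt s) = Pmap q V' (Apt s)" unfolding PA PC h by (simp add: add.commute)
    then show ?thesis using assms(8,9) by blast
  next
    assume h: "v3 V' = v2 V" "v4 V' = v1 V"
    have "Pmap q V' (Cpt s) = Pmap q V (Apt s)" unfolding PA PC h by (simp add: add.commute)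
    then show ?thesis using assms(8,9) by blast
  next
    assume h: "v2 V = v1 V'" "v3 V = v4 V'"
    have "Pmap q V (Bpt t) = Pmap q V' (Dpt t)" unfolding PB PD h by simp
    then show ?thesis using assms(10,11) by blast
  next
    assume h: "v2 V' = v1 V" "v3 V' = v4 V"
    have "Pmap q V' (Bpt t) = Pmap q V (Dpt t)" unfolding PB PD h by simp
    then show ?thesis using assms(10,11) by blast
  qed
qed

lemma exit1: "\<exists>k1 k2. k1 + k2 = m - 1 \<and> Sm q m (k1, k2, 0, 0) \<in> W1 \<and> Sm q m (0, 0, k2, k1) \<in> W1"
proof -
  have "\<exists>p. case p of (k1, k2) \<Rightarrow> (k1, k2, 0, 0) \<in> Aidx m \<and> Sm q m (k1, k2, 0, 0) \<in> W1 \<and> Sm q m (0, 0, k2, k1) \<in> W1"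
    using exitp unfolding exit_property_def by (blast dest: ex1_implies_ex)
  then obtain k1 k2 where "(k1, k2, 0, 0) \<in> Aidx m" "Sm q m (k1, k2, 0, 0) \<in> W1" "Sm q m (0, 0, k2, k1) \<in> W1"
    by auto
  moreover then have "k1 + k2 = m - 1" by (auto simp: Aidx_def A1_def A2_def A3_def)
  ultimately show ?thesis by blast
qed

lemma exit2: "\<exists>k1 k4. k1 + k4 = m - 1 \<and> Sm q m (k1, 0, 0, k4) \<in> W1 \<and> Sm q m (0, k1, k4, 0) \<in> W1"
proof -
  have "\<exists>p. case p of (k1, k4) \<Rightarrow> (k1, 0, 0, k4) \<in> Aidx m \<and> Sm q m (k1, 0, 0, k4) \<in> W1 \<and> Sm q m (0, k1, k4, 0) \<in> W1"
    using exitp unfolding exit_property_def by (blast dest: ex1_implies_ex)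
  then obtain k1 k4 where "(k1, 0, 0, k4) \<in> Aidx m" "Sm q m (k1, 0, 0, k4) \<in> W1" "Sm q m (0, k1, k4, 0) \<in> W1"
    by auto
  moreover then have "k1 + k4 = m - 1" by (auto simp: Aidx_def A1_def A2_def A3_def)
  ultimately show ?thesis by blast
qed

lemma inv: "\<exists>S s t. S \<subseteq> (Phi ^^ n) QQ \<and> path_connected S \<and> 0 \<le> s \<and> s \<le> 1 \<and> 0 \<le> t \<and> t \<le> 1 \<and>
   Apt s \<in> S \<and> Cpt s \<in> S \<and> Dpt t \<in> S \<and> Bpt t \<in> S"
proof (induction n)
  case 0
  have "path_connected QQ" by (rule convex_imp_path_connected[OF convex_convex_hull])
  then show ?case using pts_QQ[of 0] by (intro exI[of _ QQ] exI[of _ 0]) simp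
next
  case (Suc n)
  then obtain S s t where S: "S \<subseteq> (Phi ^^ n) QQ" "path_connected S" "0 \<le> s" "s \<le> 1" "0 \<le> t" "t \<le> 1"
    "Apt s \<in> S" "Cpt s \<in> S" "Dpt t \<in> S" "Bpt t \<in> S" by blast
  have SQ: "S \<subseteq> QQ" using S(1) pow_sub by blast
  let ?S = "\<Union>V\<in>W1. Pmap q V ` S"
  have sub: "?S \<subseteq> (Phi ^^ Suc n) QQ" using S(1) unfolding Phi_def by auto
  have pc: "path_connected ?S"
  proof (rule pc_union[OF conn])
    fix V assume "V \<in> W1"
    show "path_connected (Pmap q V ` S)"
      by (rule path_connected_continuous_image[OF continuous_on_subset[OF Pmap_cont SQ] S(2)])
  next
    fix V V' assume "V \<in> W1" "V' \<in> W1" "quad_adj V V'"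
    then show "Pmap q V ` S \<inter> Pmap q V' ` S \<noteq> {}" using glue_int S(3-10) by blast
  qed
  obtain k1 k2 where e1: "k1 + k2 = m - 1" "Sm q m (k1, k2, 0, 0) \<in> W1" "Sm q m (0, 0, k2, k1) \<in> W1"
    using exit1 by blast
  obtain l1 l4 where e2: "l1 + l4 = m - 1" "Sm q m (l1, 0, 0, l4) \<in> W1" "Sm q m (0, l1, l4, 0) \<in> W1"
    using exit2 by blast
  define s' where "s' = (real k2 + s) / real m"
  define t' where "t' = (real l1 + t) / real m"
  have mpos: "real m > 0" using m0 by simp
  have "k2 + 1 \<le> m" "l1 + 1 \<le> m" using e1(1) e2(1) m0 by arith+
  then have km: "real k2 + 1 \<le> real m" "real l1 + 1 \<le> real m"
    by (metis of_nat_1 of_nat_add of_nat_le_iff)+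
  have s'b: "0 \<le> s'" "s' \<le> 1" unfolding s'_def
    using S(3,4) km(1) mpos by (simp_all add: pos_divide_le_eq)
  have t'b: "0 \<le> t'" "t' \<le> 1" unfolding t'_def
    using S(5,6) km(2) mpos by (simp_all add: pos_divide_le_eq)
  have "Apt s' \<in> ?S"
    by (rule UN_I[OF e1(2)], rule image_eqI[OF _ S(7)]) (use exA[OF e1(1) m0 S(3,4)] in \<open>simp add: s'_def\<close>)
  moreover have "Cpt s' \<in> ?S"
    by (rule UN_I[OF e1(3)], rule image_eqI[OF _ S(8)]) (use exC[OF e1(1) m0 S(3,4)] in \<open>simp add: s'_def\<close>)
  moreover have "Dpt t' \<in> ?S"
    by (rule UN_I[OF e2(2)], rule image_eqI[OF _ S(9)]) (use exD[OF e2(1) m0 S(5,6)] in \<open>simp add: t'_def\<close>)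
  moreover have "Bpt t' \<in> ?S"
    by (rule UN_I[OF e2(3)], rule image_eqI[OF _ S(10)]) (use exB[OF e2(1) m0 S(5,6)] in \<open>simp add: t'_def\<close>)
  ultimately show ?case using sub pc s'b t'b by blast
qed

end



lemma coord_bounds: assumes "k \<in> Aidx m" "m \<ge> 2" "vc m k = (r1, r2, r3, r4)"
  shows "k \<noteq> (m-1, 0, 0, 0) \<Longrightarrow> fst r1 \<le> m - 1 \<and> fst r2 \<le> m - 1 \<and> fst r3 \<le> m - 1 \<and> fst r4 \<le> m - 1"
    and "k \<noteq> (0, m-1, 0, 0) \<Longrightarrow> fst (snd r1) \<le> m - 1 \<and> fst (snd r2) \<le> m - 1 \<and> fst (snd r3) \<le> m - 1 \<and> fst (snd r4) \<le> m - 1"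
    and "k \<noteq> (0, 0, m-1, 0) \<Longrightarrow> fst (snd (snd r1)) \<le> m - 1 \<and> fst (snd (snd r2)) \<le> m - 1 \<and> fst (snd (snd r3)) \<le> m - 1 \<and> fst (snd (snd r4)) \<le> m - 1"
    and "k \<noteq> (0, 0, 0, m-1) \<Longrightarrow> snd (snd (snd r1)) \<le> m - 1 \<and> snd (snd (snd r2)) \<le> m - 1 \<and> snd (snd (snd r3)) \<le> m - 1 \<and> snd (snd (snd r4)) \<le> m - 1"
  using vc_cases[OF assms(1)] assms(2,3) by auto

context qctx begin

lemma region_bound: assumes "orient P R (v1 V) \<le> M" "orient P R (v2 V) \<le> M" "orient P R (v3 V) \<le> M" "orient P R (v4 V) \<le> M"
  "y \<in> quad_region V" shows "orient P R y \<le> M"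
proof -
  obtain R1 R2 R3 R4 where V: "V = (R1, R2, R3, R4)" by (cases V) auto
  have b: "orient P R R1 \<le> M" "orient P R R2 \<le> M" "orient P R R3 \<le> M" "orient P R R4 \<le> M"
    using assms(1-4) unfolding V by simp_all
  have "y \<in> convex hull {R1, R2, R3} \<or> y \<in> convex hull {R3, R4, R1}"
    using assms(5) unfolding V quad_region_def by simp
  then show ?thesis
  proof
    assume "y \<in> convex hull {R1, R2, R3}"
    then obtain u v w where uvw: "0 \<le> u" "0 \<le> v" "0 \<le> w" "u + v + w = 1" "y = u *\<^sub>R R1 + v *\<^sub>R R2 + w *\<^sub>R R3"
      unfolding convex_hull_3 by blast
    have "orient P R y = u * orient P R R1 + v * orient P R R2 + w * orient P R R3"
      unfolding uvw(5) by (rule orient_aff3[OF uvw(4)])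
    also have "\<dots> \<le> u * M + v * M + w * M"
      using b uvw(1-3) by (intro add_mono mult_left_mono) auto
    also have "\<dots> = (u + v + w) * M" by (simp add: distrib_right)
    also have "\<dots> = M" using uvw(4) by simp
    finally show ?thesis .
  next
    assume "y \<in> convex hull {R3, R4, R1}"
    then obtain u v w where uvw: "0 \<le> u" "0 \<le> v" "0 \<le> w" "u + v + w = 1" "y = u *\<^sub>R R3 + v *\<^sub>R R4 + w *\<^sub>R R1"
      unfolding convex_hull_3 by blast
    have "orient P R y = u * orient P R R3 + v * orient P R R4 + w * orient P R R1"
      unfolding uvw(5) by (rule orient_aff3[OF uvw(4)])
    also have "\<dots> \<le> u * M + v * M + w * M"
      using b uvw(1-3) by (intro add_mono mult_left_mono) auto
    also have "\<dots> = (u + v + w) * M" by (simp add: distrib_right)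
    also have "\<dots> = M" using uvw(4) by simp
    finally show ?thesis .
  qed
qed

lemma orient_cv: assumes "valid m r" "m > 0"
  shows "orient P R (cv m r q) = real (fst r) / real m * orient P R Q1 + real (fst (snd r)) / real m * orient P R Q2
     + real (fst (snd (snd r))) / real m * orient P R Q3 + real (snd (snd (snd r))) / real m * orient P R Q4"
proof -
  obtain a b c d where r: "r = (a, b, c, d)" by (cases r) auto
  have "a + b + c + d = m" using assms(1) unfolding valid_def r by simp
  from sum_div[OF this assms(2)] show ?thesis unfolding r cv_def prod.case by (simp add: orq)
qed

lemma bnd: assumes "real a \<le> real m - 1" "m > 0" "K > 0" "0 \<le> x" "0 \<le> L"
  shows "real a / real m * K - x * L \<le> (real m - 1) / real m * K"
proof -
  have "real a / real m \<le> (real m - 1) / real m" using assms(1,2) by (simp add: divide_right_mono)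
  then have "real a / real m * K \<le> (real m - 1) / real m * K" using assms(3) by (intro mult_right_mono) auto
  moreover have "0 \<le> x * L" using assms(4,5) by simp
  ultimately show ?thesis by linarith
qed

lemma lt_K: "m > 0 \<Longrightarrow> K > 0 \<Longrightarrow> (real m - 1) / real m * K < K"
  by (simp add: field_simps)

lemma corner_gen: assumes "k \<in> Aidx m" "m > 0" "vc m k = (r1, r2, r3, r4)"
  "\<And>r. valid m r \<Longrightarrow> sel r \<le> m - 1 \<Longrightarrow> orient P R (cv m r q) \<le> M"
  "sel r1 \<le> m - 1" "sel r2 \<le> m - 1" "sel r3 \<le> m - 1" "sel r4 \<le> m - 1" "orient P R z > M"
  shows "z \<notin> quad_region (Sm q m k)"
proof
  assume z: "z \<in> quad_region (Sm q m k)"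
  note V = Sm_explicit[OF assms(1,2,3)] and vr = vc_valid[OF assms(1,2,3)]
  have b: "orient P R (cv m r1 q) \<le> M" "orient P R (cv m r2 q) \<le> M" "orient P R (cv m r3 q) \<le> M"
    "orient P R (cv m r4 q) \<le> M"
    by (rule assms(4)[OF vr(1) assms(5)], rule assms(4)[OF vr(2) assms(6)], rule assms(4)[OF vr(3) assms(7)],
        rule assms(4)[OF vr(4) assms(8)])
  have "orient P R z \<le> M"
    by (rule region_bound[OF _ _ _ _ z]) (simp_all add: V b)
  then show False using assms(9) by simp
qed

lemma rm1: "m > 0 \<Longrightarrow> (n::nat) \<le> m - 1 \<Longrightarrow> real n \<le> real m - 1"
proof -
  assume a: "m > 0" "n \<le> m - 1"
  have "real n \<le> real (m - 1)" using a(2) by (simp only: of_nat_le_iff)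
  moreover have "real (m - 1) = real m - 1" using a(1) by (simp add: of_nat_diff)
  ultimately show ?thesis by simp
qed

lemma corner1: assumes "k \<in> Aidx m" "m \<ge> 2" "k \<noteq> (m-1, 0, 0, 0)" shows "Q1 \<notin> quad_region (Sm q m k)"
proof -
  obtain r1 r2 r3 r4 where r: "vc m k = (r1, r2, r3, r4)" by (cases "vc m k") auto
  have m0: "m > 0" using assms(2) by simp
  note cb = coord_bounds(1)[OF assms(1,2) r assms(3)]
  show ?thesis
  proof (rule corner_gen[OF assms(1) m0 r, of fst Q2 Q4 "(real m - 1) / real m * orient Q1 Q2 Q4"])
    fix r assume "valid m r" "fst r \<le> m - 1"
    then show "orient Q2 Q4 (cv m r q) \<le> (real m - 1) / real m * orient Q1 Q2 Q4"
      unfolding orient_cv[OF \<open>valid m r\<close> m0]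
      using bnd[OF rm1[OF m0 \<open>fst r \<le> m - 1\<close>] m0 O124, of "real (fst (snd (snd r))) / real m" "orient Q2 Q3 Q4"] O234
      by (simp add: onorm)
  next
    show "orient Q2 Q4 Q1 > (real m - 1) / real m * orient Q1 Q2 Q4" using lt_K[OF m0 O124] by (simp add: onorm)
  qed (use cb in auto)
qed

lemma corner2: assumes "k \<in> Aidx m" "m \<ge> 2" "k \<noteq> (0, m-1, 0, 0)" shows "Q2 \<notin> quad_region (Sm q m k)"
proof -
  obtain r1 r2 r3 r4 where r: "vc m k = (r1, r2, r3, r4)" by (cases "vc m k") auto
  have m0: "m > 0" using assms(2) by simp
  note cb = coord_bounds(2)[OF assms(1,2) r assms(3)]
  show ?thesis
  proof (rule corner_gen[OF assms(1) m0 r, of "\<lambda>r. fst (snd r)" Q3 Q1 "(real m - 1) / real m * orient Q1 Q2 Q3"])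
    fix r assume "valid m r" "fst (snd r) \<le> m - 1"
    then show "orient Q3 Q1 (cv m r q) \<le> (real m - 1) / real m * orient Q1 Q2 Q3"
      unfolding orient_cv[OF \<open>valid m r\<close> m0]
      using bnd[OF rm1[OF m0 \<open>fst (snd r) \<le> m - 1\<close>] m0 D1, of "real (snd (snd (snd r))) / real m" "orient Q1 Q3 Q4"] D2
      by (simp add: onorm)
  next
    show "orient Q3 Q1 Q2 > (real m - 1) / real m * orient Q1 Q2 Q3" using lt_K[OF m0 D1] by (simp add: onorm)
  qed (use cb in auto)
qed

lemma corner3: assumes "k \<in> Aidx m" "m \<ge> 2" "k \<noteq> (0, 0, m-1, 0)" shows "Q3 \<notin> quad_region (Sm q m k)"
proof -
  obtain r1 r2 r3 r4 where r: "vc m k = (r1, r2, r3, r4)" by (cases "vc m k") auto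
  have m0: "m > 0" using assms(2) by simp
  note cb = coord_bounds(3)[OF assms(1,2) r assms(3)]
  show ?thesis
  proof (rule corner_gen[OF assms(1) m0 r, of "\<lambda>r. fst (snd (snd r))" Q4 Q2 "(real m - 1) / real m * orient Q2 Q3 Q4"])
    fix r assume "valid m r" "fst (snd (snd r)) \<le> m - 1"
    then show "orient Q4 Q2 (cv m r q) \<le> (real m - 1) / real m * orient Q2 Q3 Q4"
      unfolding orient_cv[OF \<open>valid m r\<close> m0]
      using bnd[OF rm1[OF m0 \<open>fst (snd (snd r)) \<le> m - 1\<close>] m0 O234, of "real (fst r) / real m" "orient Q1 Q2 Q4"] O124
      by (simp add: onorm)
  next
    show "orient Q4 Q2 Q3 > (real m - 1) / real m * orient Q2 Q3 Q4" using lt_K[OF m0 O234] by (simp add: onorm)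
  qed (use cb in auto)
qed

lemma corner4: assumes "k \<in> Aidx m" "m \<ge> 2" "k \<noteq> (0, 0, 0, m-1)" shows "Q4 \<notin> quad_region (Sm q m k)"
proof -
  obtain r1 r2 r3 r4 where r: "vc m k = (r1, r2, r3, r4)" by (cases "vc m k") auto
  have m0: "m > 0" using assms(2) by simp
  note cb = coord_bounds(4)[OF assms(1,2) r assms(3)]
  show ?thesis
  proof (rule corner_gen[OF assms(1) m0 r, of "\<lambda>r. snd (snd (snd r))" Q1 Q3 "(real m - 1) / real m * orient Q1 Q3 Q4"])
    fix r assume "valid m r" "snd (snd (snd r)) \<le> m - 1"
    then show "orient Q1 Q3 (cv m r q) \<le> (real m - 1) / real m * orient Q1 Q3 Q4"
      unfolding orient_cv[OF \<open>valid m r\<close> m0]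
      using bnd[OF rm1[OF m0 \<open>snd (snd (snd r)) \<le> m - 1\<close>] m0 D2, of "real (fst (snd r)) / real m" "orient Q1 Q2 Q3"] D1
      by (simp add: onorm algebra_simps)
  next
    show "orient Q1 Q3 Q4 > (real m - 1) / real m * orient Q1 Q3 Q4" using lt_K[OF m0 D2] by simp
  qed (use cb in auto)
qed

definition Sq :: quad where "Sq = ((0, 0), (1, 0), (1, 1), (0, 1))"

abbreviation "hh \<equiv> Pmap q Sq"

lemma hT1: "0 \<le> a \<Longrightarrow> 0 \<le> b \<Longrightarrow> 0 \<le> c \<Longrightarrow> a + b + c = 1 \<Longrightarrow> hh (cmb a b c 0 q) = (b + c, c)"
  by (subst PM1) (simp_all add: Sq_def cmb_simp)

lemma hT2: "0 \<le> a \<Longrightarrow> 0 \<le> c \<Longrightarrow> 0 \<le> d \<Longrightarrow> a + c + d = 1 \<Longrightarrow> hh (cmb a 0 c d q) = (c, c + d)"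
  by (subst PM2) (simp_all add: Sq_def cmb_simp)

lemma hh_inj: assumes "x \<in> QQ" "y \<in> QQ" "hh x = hh y" shows "x = y"
proof -
  have x: "x \<in> T1 \<or> x \<in> T2" and y: "y \<in> T1 \<or> y \<in> T2" using assms(1,2) unfolding QQ_eq by auto
  { fix x y assume x: "x \<in> T1" and y: "y \<in> T2" and e: "hh x = hh y"
    obtain a b c where abc: "0 \<le> a" "0 \<le> b" "0 \<le> c" "a + b + c = 1" "x = cmb a b c 0 q"
      using x unfolding T1_iff by blast
    obtain a' c' d' where acd: "0 \<le> a'" "0 \<le> c'" "0 \<le> d'" "a' + c' + d' = 1" "y = cmb a' 0 c' d' q"
      using y unfolding T2_iff by blast
    have "(b + c, c) = (c', c' + d')" using e hT1[OF abc(1-4)] hT2[OF acd(1-4)] abc(5) acd(5) by simp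
    then have "b = 0" "d' = 0" "c = c'" using abc acd by auto
    then have "a = a'" using abc(4) acd(4) by simp
    then have "x = y" unfolding abc(5) acd(5) using \<open>b = 0\<close> \<open>d' = 0\<close> \<open>c = c'\<close> by (simp add: cmb_simp) }
  note mixed = this
  show ?thesis using x y
  proof (elim disjE)
    assume x: "x \<in> T1" and y: "y \<in> T1"
    obtain a b c where abc: "0 \<le> a" "0 \<le> b" "0 \<le> c" "a + b + c = 1" "x = cmb a b c 0 q"
      using x unfolding T1_iff by blast
    obtain a' b' c' where abc': "0 \<le> a'" "0 \<le> b'" "0 \<le> c'" "a' + b' + c' = 1" "y = cmb a' b' c' 0 q"
      using y unfolding T1_iff by blast
    have "(b + c, c) = (b' + c', c')" using assms(3) hT1[OF abc(1-4)] hT1[OF abc'(1-4)] abc(5) abc'(5) by simp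
    then have "b = b'" "c = c'" by auto
    moreover then have "a = a'" using abc(4) abc'(4) by simp
    ultimately show "x = y" unfolding abc(5) abc'(5) by simp
  next
    assume "x \<in> T1" "y \<in> T2" then show "x = y" using mixed assms(3) by blast
  next
    assume "x \<in> T2" "y \<in> T1" then show "x = y" using mixed assms(3) by (metis)
  next
    assume x: "x \<in> T2" and y: "y \<in> T2"
    obtain a c d where acd: "0 \<le> a" "0 \<le> c" "0 \<le> d" "a + c + d = 1" "x = cmb a 0 c d q"
      using x unfolding T2_iff by blast
    obtain a' c' d' where acd': "0 \<le> a'" "0 \<le> c'" "0 \<le> d'" "a' + c' + d' = 1" "y = cmb a' 0 c' d' q"
      using y unfolding T2_iff by blast
    have "(c, c + d) = (c', c' + d')" using assms(3) hT2[OF acd(1-4)] hT2[OF acd'(1-4)] acd(5) acd'(5) by simp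
    then have "c = c'" "d = d'" by auto
    moreover then have "a = a'" using acd(4) acd'(4) by simp
    ultimately show "x = y" unfolding acd(5) acd'(5) by simp
  qed
qed

lemma hh_box: assumes "x \<in> QQ" shows "0 \<le> fst (hh x) \<and> fst (hh x) \<le> 1 \<and> 0 \<le> snd (hh x) \<and> snd (hh x) \<le> 1"
proof -
  have "x \<in> T1 \<or> x \<in> T2" using assms unfolding QQ_eq by auto
  then show ?thesis
  proof
    assume "x \<in> T1"
    then obtain a b c where abc: "0 \<le> a" "0 \<le> b" "0 \<le> c" "a + b + c = 1" "x = cmb a b c 0 q"
      unfolding T1_iff by blast
    show ?thesis unfolding abc(5) hT1[OF abc(1-4)] using abc(1-4) by simp
  next
    assume "x \<in> T2"
    then obtain a c d where acd: "0 \<le> a" "0 \<le> c" "0 \<le> d" "a + c + d = 1" "x = cmb a 0 c d q"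
      unfolding T2_iff by blast
    show ?thesis unfolding acd(5) hT2[OF acd(1-4)] using acd(1-4) by simp
  qed
qed

definition HH :: "pt \<Rightarrow> real^2" where
  "HH x = (\<chi> i. if i = 1 then fst (hh x) else snd (hh x))"

lemma HH_cont: "continuous_on QQ HH"
  unfolding HH_def
proof (intro continuous_on_vec_lambda)
  fix i :: 2
  have c1: "continuous_on QQ (\<lambda>x. fst (hh x))" by (intro continuous_on_fst Pmap_cont)
  have c2: "continuous_on QQ (\<lambda>x. snd (hh x))" by (intro continuous_on_snd Pmap_cont)
  show "continuous_on QQ (\<lambda>x. if i = 1 then fst (hh x) else snd (hh x))"
    by (cases "i = 1") (simp_all add: c1 c2)
qed

lemma HH_nth[simp]: "HH x $ 1 = fst (hh x)" "HH x $ 2 = snd (hh x)"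
  by (simp_all add: HH_def)

lemma fashodaQ: assumes "path f" "path g" "path_image f \<subseteq> QQ" "path_image g \<subseteq> QQ"
  "snd (hh (pathstart f)) = 0" "snd (hh (pathfinish f)) = 1"
  "fst (hh (pathstart g)) = 0" "fst (hh (pathfinish g)) = 1"
  shows "path_image f \<inter> path_image g \<noteq> {}"
proof -
  let ?a = "(\<chi> i. 0) :: real^2" and ?b = "(\<chi> i. 1) :: real^2"
  have pf: "path (HH \<circ> f)" by (rule path_continuous_image[OF assms(1) continuous_on_subset[OF HH_cont assms(3)]])
  have pg: "path (HH \<circ> g)" by (rule path_continuous_image[OF assms(2) continuous_on_subset[OF HH_cont assms(4)]])
  have box: "\<And>x. x \<in> QQ \<Longrightarrow> HH x \<in> cbox ?a ?b"
  proof -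
    fix x assume "x \<in> QQ"
    note b = hh_box[OF this]
    show "HH x \<in> cbox ?a ?b" unfolding mem_box_cart
    proof
      fix i :: 2
      show "?a $ i \<le> HH x $ i \<and> HH x $ i \<le> ?b $ i"
        using b by (cases "i = 1") (simp_all add: HH_def)
    qed
  qed
  have ig: "path_image (HH \<circ> g) \<subseteq> cbox ?a ?b" using assms(4) box unfolding path_image_compose by blast
  have if': "path_image (HH \<circ> f) \<subseteq> cbox ?a ?b" using assms(3) box unfolding path_image_compose by blast
  obtain z where z: "z \<in> path_image (HH \<circ> g)" "z \<in> path_image (HH \<circ> f)"
    by (rule fashoda[OF pg pf ig if']) (use assms(5-8) in \<open>simp_all add: pathstart_compose pathfinish_compose\<close>)
  obtain u where u: "u \<in> path_image g" "z = HH u" using z(1) unfolding path_image_compose by blast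
  obtain v where v: "v \<in> path_image f" "z = HH v" using z(2) unfolding path_image_compose by blast
  have "hh u = hh v"
  proof -
    have "HH u $ 1 = HH v $ 1" "HH u $ 2 = HH v $ 2" using u(2) v(2) by simp_all
    then show ?thesis by (simp add: prod_eq_iff)
  qed
  then have "u = v" using hh_inj u(1) v(1) assms(3,4) by blast
  then show ?thesis using u(1) v(1) by blast
qed

lemma hh_pts: assumes "0 \<le> s" "s \<le> 1"
  shows "hh (Apt s) = (s, 0)" "hh (Cpt s) = (s, 1)" "hh (Dpt s) = (0, 1 - s)" "hh (Bpt s) = (1, 1 - s)"
proof -
  show "hh (Apt s) = (s, 0)" unfolding Apt_def using hT1[of "1 - s" s 0] assms by simp
  show "hh (Cpt s) = (s, 1)" unfolding Cpt_def using hT2[of 0 s "1 - s"] assms by simp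
  show "hh (Dpt s) = (0, 1 - s)" unfolding Dpt_def using hT2[of s 0 "1 - s"] assms by simp
  show "hh (Bpt s) = (1, 1 - s)" unfolding Bpt_def using hT1[of 0 s "1 - s"] assms by simp
qed

lemma Qs: "Q1 = cmb 1 0 0 0 q" "Q2 = cmb 0 1 0 0 q" "Q3 = cmb 0 0 1 0 q" "Q4 = cmb 0 0 0 1 q"
  by (simp_all add: cmb_simp)

lemma hh_corners: "hh Q1 = (0, 0)" "hh Q2 = (1, 0)" "hh Q3 = (1, 1)" "hh Q4 = (0, 1)"
  using hT1[of 1 0 0] hT1[of 0 1 0] hT1[of 0 0 1] hT2[of 0 0 1] by (simp_all add: Qs[symmetric])

lemma corners_QQ: "Q1 \<in> QQ" "Q2 \<in> QQ" "Q3 \<in> QQ" "Q4 \<in> QQ"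
  by (simp_all add: hull_inc)

end

lemma fip_dec: assumes "compact K" "\<And>n. closed (L n)" "\<And>n. L (Suc n) \<subseteq> L n" "K \<inter> (\<Inter>n. L n) = {}"
  shows "\<exists>N. K \<inter> L N = {}"
proof (rule ccontr)
  assume "\<not> (\<exists>N. K \<inter> L N = {})"
  then have ne: "\<And>N. K \<inter> L N \<noteq> {}" by blast
  have "K \<inter> (\<Inter>i\<in>UNIV. L i) \<noteq> {}"
  proof (rule compact_imp_fip_image[OF assms(1)])
    fix i show "closed (L i)" by (rule assms(2))
  next
    fix I' :: "nat set" assume fin: "finite I'"
    define N where "N = Max (insert 0 I')"
    have "\<And>i. i \<in> I' \<Longrightarrow> L N \<subseteq> L i"
    proof -
      fix i assume "i \<in> I'"
      then have "i \<le> N" unfolding N_def using fin by simp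
      then show "L N \<subseteq> L i" by (rule lift_Suc_antimono_le[of L, OF assms(3)])
    qed
    then have "K \<inter> L N \<subseteq> K \<inter> (\<Inter>i\<in>I'. L i)" by blast
    then show "K \<inter> (\<Inter>i\<in>I'. L i) \<noteq> {}" using ne[of N] by blast
  qed
  then show False using assms(4) by simp
qed

locale lab3 = lab2 +
  assumes m4: "m \<ge> 4" and cornp: "corner_property q m W1"
begin

lemma LF_eq: "lab_fractal q W1 = (\<Inter>n. (Phi ^^ Suc n) QQ)"
  unfolding lab_fractal_def Ln_eq ..

lemma out_of_L0: assumes "z \<notin> (\<Union>W\<in>W1. quad_region W)" shows "z \<notin> lab_fractal q W1"
proof
  assume "z \<in> lab_fractal q W1"
  then have "z \<in> (\<Union>W\<in>lab_level q W1 0. quad_region W)" unfolding lab_fractal_def by blast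
  then show False using assms by simp
qed

lemma corner_out: assumes "Sm q m kc \<notin> W1" "\<And>k. k \<in> Aidx m \<Longrightarrow> k \<noteq> kc \<Longrightarrow> z \<notin> quad_region (Sm q m k)"
  shows "z \<notin> lab_fractal q W1"
proof (rule out_of_L0)
  show "z \<notin> (\<Union>W\<in>W1. quad_region W)"
  proof
    assume "z \<in> (\<Union>W\<in>W1. quad_region W)"
    then obtain W where W: "W \<in> W1" "z \<in> quad_region W" by blast
    obtain k where k: "k \<in> Aidx m" "W = Sm q m k" using cellW[OF W(1)] by blast
    show False
    proof (cases "k = kc")
      case True then show False using assms(1) W(1) k(2) by simp
    next
      case False then show False using assms(2)[OF k(1)] W(2) k(2) by simp
    qed
  qed
qed

lemma main: "\<not> path_connected (QQ - lab_fractal q W1)"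
proof
  assume pc: "path_connected (QQ - lab_fractal q W1)"
  let ?LF = "lab_fractal q W1"
  have m2: "m \<ge> 2" using m4 by simp
  have "Q1 \<notin> ?LF \<or> Q3 \<notin> ?LF"
  proof -
    have "Sm q m (m - 1, 0, 0, 0) \<notin> W1 \<or> Sm q m (0, 0, m - 1, 0) \<notin> W1"
      using cornp unfolding corner_property_def by blast
    then show ?thesis
    proof
      assume "Sm q m (m - 1, 0, 0, 0) \<notin> W1"
      then have "Q1 \<notin> ?LF" by (rule corner_out) (rule corner1[OF _ m2])
      then show ?thesis ..
    next
      assume "Sm q m (0, 0, m - 1, 0) \<notin> W1"
      then have "Q3 \<notin> ?LF" by (rule corner_out) (rule corner3[OF _ m2])
      then show ?thesis ..
    qed
  qed
  then obtain a where a: "a = Q1 \<or> a = Q3" "a \<notin> ?LF" by blast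
  have "Q2 \<notin> ?LF \<or> Q4 \<notin> ?LF"
  proof -
    have "Sm q m (0, m - 1, 0, 0) \<notin> W1 \<or> Sm q m (0, 0, 0, m - 1) \<notin> W1"
      using cornp unfolding corner_property_def by blast
    then show ?thesis
    proof
      assume "Sm q m (0, m - 1, 0, 0) \<notin> W1"
      then have "Q2 \<notin> ?LF" by (rule corner_out) (rule corner2[OF _ m2])
      then show ?thesis ..
    next
      assume "Sm q m (0, 0, 0, m - 1) \<notin> W1"
      then have "Q4 \<notin> ?LF" by (rule corner_out) (rule corner4[OF _ m2])
      then show ?thesis ..
    qed
  qed
  then obtain b where b: "b = Q2 \<or> b = Q4" "b \<notin> ?LF" by blast
  have aQ: "a \<in> QQ - ?LF" using a corners_QQ by auto
  have bQ: "b \<in> QQ - ?LF" using b corners_QQ by auto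
  obtain \<gamma> where \<gamma>: "path \<gamma>" "path_image \<gamma> \<subseteq> QQ - ?LF" "pathstart \<gamma> = a" "pathfinish \<gamma> = b"
    using pc aQ bQ unfolding path_connected_def by blast
  let ?K = "path_image \<gamma>"
  have "?K \<inter> (\<Inter>n. (Phi ^^ Suc n) QQ) = {}" using \<gamma>(2) unfolding LF_eq by blast
  then obtain N where N: "?K \<inter> (Phi ^^ Suc N) QQ = {}"
    using fip_dec[of ?K "\<lambda>n. (Phi ^^ Suc n) QQ"] compact_path_image[OF \<gamma>(1)] closed_pow pow_dec by blast
  obtain S s t where S: "S \<subseteq> (Phi ^^ Suc N) QQ" "path_connected S" "0 \<le> s" "s \<le> 1" "0 \<le> t" "t \<le> 1"
    "Apt s \<in> S" "Cpt s \<in> S" "Dpt t \<in> S" "Bpt t \<in> S" using inv by blast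
  have SQ: "S \<subseteq> QQ" using S(1) pow_sub by blast
  obtain f where f: "path f" "path_image f \<subseteq> S" "pathstart f = Apt s" "pathfinish f = Cpt s"
    using S(2,7,8) unfolding path_connected_def by blast
  obtain g where g: "path g" "path_image g \<subseteq> S" "pathstart g = Dpt t" "pathfinish g = Bpt t"
    using S(2,9,10) unfolding path_connected_def by blast
  have KQ: "?K \<subseteq> QQ" using \<gamma>(2) by blast
  have fQ: "path_image f \<subseteq> QQ" using f(2) SQ by blast
  have gQ: "path_image g \<subseteq> QQ" using g(2) SQ by blast
  note hf = hh_pts[OF S(3,4)] and hg = hh_pts[OF S(5,6)]
  have disj: "\<And>X. path_image X \<subseteq> S \<Longrightarrow> path_image X \<inter> ?K = {}" using N S(1) by blast
  from a(1) b(1) show False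
  proof (elim disjE)
    assume "a = Q1" "b = Q2"
    have "path_image f \<inter> ?K \<noteq> {}"
      by (rule fashodaQ[OF f(1) \<gamma>(1) fQ KQ]) (simp_all add: f(3,4) \<gamma>(3,4) hf hh_corners \<open>a = Q1\<close> \<open>b = Q2\<close>)
    then show False using disj[OF f(2)] by blast
  next
    assume "a = Q1" "b = Q4"
    have "?K \<inter> path_image g \<noteq> {}"
      by (rule fashodaQ[OF \<gamma>(1) g(1) KQ gQ]) (simp_all add: g(3,4) \<gamma>(3,4) hg hh_corners \<open>a = Q1\<close> \<open>b = Q4\<close>)
    then show False using disj[OF g(2)] by (simp add: Int_commute)
  next
    assume "a = Q3" "b = Q2"
    have "path_image (reversepath \<gamma>) \<inter> path_image g \<noteq> {}"
      by (rule fashodaQ[OF path_reversepath[THEN iffD2, OF \<gamma>(1)] g(1)]) (simp_all add: KQ gQ g(3,4) \<gamma>(3,4) hg hh_corners \<open>a = Q3\<close> \<open>b = Q2\<close>)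
    then show False using disj[OF g(2)] by (simp add: path_image_reversepath Int_commute)
  next
    assume "a = Q3" "b = Q4"
    have "path_image f \<inter> path_image (reversepath \<gamma>) \<noteq> {}"
      by (rule fashodaQ[OF f(1) path_reversepath[THEN iffD2, OF \<gamma>(1)]]) (simp_all add: KQ fQ f(3,4) \<gamma>(3,4) hf hh_corners \<open>a = Q3\<close> \<open>b = Q4\<close>)
    then show False using disj[OF f(2)] by (simp add: path_image_reversepath)
  qed
qed

end



theorem theorem4p3:
  fixes Q1 Q2 Q3 Q4 :: "real \<times> real" and m :: nat and W1 :: "quad set"
  assumes "convex_quad_acw Q1 Q2 Q3 Q4"
    and "dist Q1 Q3 \<le> dist Q2 Q4"
    and "4 \<le> m"
    and "labyrinth_set (Q1, Q2, Q3, Q4) m W1"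
  shows "\<not> path_connected (convex hull {Q1, Q2, Q3, Q4} - lab_fractal (Q1, Q2, Q3, Q4) W1)"
proof -
  have L: "4 \<le> m" "W1 \<subseteq> Sset (Q1, Q2, Q3, Q4) m" "is_tree W1 quad_adj"
    "exit_property (Q1, Q2, Q3, Q4) m W1" "corner_property (Q1, Q2, Q3, Q4) m W1"
    using assms(4) unfolding labyrinth_set_def by auto
  interpret lab3 Q1 Q2 Q3 Q4 m W1
  proof (unfold_locales)
    show "convex_quad_acw Q1 Q2 Q3 Q4" by (rule assms(1))
    show "0 < m" using L(1) by simp
    show "W1 \<subseteq> Sset (Q1, Q2, Q3, Q4) m" by (rule L(2))
    show "finite W1" using L(3) unfolding is_tree_def by simp
    show "graph_connected W1 quad_adj" using L(3) unfolding is_tree_def by simp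
    show "exit_property (Q1, Q2, Q3, Q4) m W1" by (rule L(4))
    show "4 \<le> m" by (rule L(1))
    show "corner_property (Q1, Q2, Q3, Q4) m W1" by (rule L(5))
  qed
  show ?thesis by (rule main)
qed

end
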